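(* Let $k\geq2$ and let $L=(l_1,\dots,l_k)$ be positive integers with sum $n$ which are generic and reduced. Then the fundamental group $\pi_1(Tonn^{n,k}(L))$ is abelian.
   Context: $L$ is generic if for all $I,J\subseteq[k]$, $\sum_{i\in I}l_i=\sum_{j\in J}l_j$ implies $I=J$; reduced if $\gcd(l_1,\dots,l_k)=1$. The generalized tonnetz $Tonn^{n,k}(L)$ is the simplicial complex on vertex set $\mathbb{Z}_n$ whose maximal simplices are $\Delta(x;\sigma)=\{x,\,x+l_{\sigma(1)},\dots,x+l_{\sigma(1)}+\dots+l_{\sigma(k-1)}\}$ for $x\in\mathbb{Z}_n$, $\sigma\in S_k$. *)

theory Defs
  imports "HOL-Analysis.Analysis"
begin

text \<open>A tuple L = (l_1,...,l_k) is a list of naturals; index i in {0..<k} stands for l_(i+1).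
  The vertex set Z_n is represented by {0..<n}, with addition mod n, n = sum_list L.\<close>

definition generic :: "nat list \<Rightarrow> bool" where
  "generic L \<longleftrightarrow> (\<forall>I J. I \<subseteq> {..<length L} \<and> J \<subseteq> {..<length L} \<and>
      (\<Sum>i\<in>I. L ! i) = (\<Sum>j\<in>J. L ! j) \<longrightarrow> I = J)"

definition reduced :: "nat list \<Rightarrow> bool" where
  "reduced L \<longleftrightarrow> Gcd (set L) = 1"

definition tonn_facets :: "nat list \<Rightarrow> nat set set" where
  "tonn_facets L = {{(x + (\<Sum>j<m. L ! (\<sigma> j))) mod sum_list L | m. m < length L} | x \<sigma>.
      x < sum_list L \<and> \<sigma> permutes {..<length L}}"

definition tonnetz :: "nat list \<Rightarrow> nat set set" where
  "tonnetz L = {S. S \<noteq> {} \<and> (\<exists>F\<in>tonn_facets L. S \<subseteq> F)}"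

text \<open>Geometric realization of a (finite) simplicial complex with vertices in nat, as a
  subspace of nat => real (product topology): vertex v is the v-th unit vector, and a point
  is a convex combination of the vertices of some simplex.\<close>
definition geom_realization :: "nat set set \<Rightarrow> (nat \<Rightarrow> real) set" where
  "geom_realization K = {x. (\<forall>i. 0 \<le> x i) \<and>
      (\<exists>S\<in>K. finite S \<and> {i. x i \<noteq> 0} \<subseteq> S \<and> sum x S = 1)}"

definition pi1_abelian :: "'a::topological_space set \<Rightarrow> 'a \<Rightarrow> bool" where
  "pi1_abelian S a \<longleftrightarrow> (\<forall>p q. path p \<and> path_image p \<subseteq> S \<and> pathstart p = a \<and> pathfinish p = a \<and>
      path q \<and> path_image q \<subseteq> S \<and> pathstart q = a \<and> pathfinish q = a \<longrightarrow>
      homotopic_paths S (p +++ q) (q +++ p))"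

end

theory Submission
  imports Defs
begin


locale tonn =
  fixes L :: "nat list"
  assumes len2: "length L \<ge> 2"
    and posL: "\<forall>l\<in>set L. l > 0"
begin

abbreviation "k \<equiv> length L"
abbreviation "n \<equiv> sum_list L"

lemma Lpos: "i < k \<Longrightarrow> L!i > 0"
  using posL nth_mem by blast

lemma n_eq: "n = (\<Sum>i<k. L!i)"
  by (simp add: sum_list_sum_nth atLeast0LessThan)

lemma n_pos: "n > 0"
proof -
  have "L \<noteq> []" using len2 by auto
  then have "L!0 > 0" using Lpos[of 0] by simp
  moreover have "L!0 \<le> (\<Sum>i<k. L!i)"
    using len2 by (intro member_le_sum) auto
  ultimately show ?thesis using n_eq by linarith
qed

lemma n_eq_int: "int n = (\<Sum>i<k. int (L!i))"
  using n_eq by simp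

definition G :: "(nat \<Rightarrow> real) \<Rightarrow> real \<Rightarrow> int" where
  "G y t = (\<Sum>i<k. int (L!i) * \<lfloor>y i + t\<rfloor>)"

lemma G_mono: "s \<le> t \<Longrightarrow> G y s \<le> G y t"
  unfolding G_def by (intro sum_mono mult_left_mono floor_mono) auto

lemma G_shift_int: "G y (t + of_int j) = G y t + j * int n"
proof -
  have "G y (t + of_int j) = (\<Sum>i<k. int (L!i) * \<lfloor>y i + t\<rfloor> + int (L!i) * j)"
    unfolding G_def
  proof (intro sum.cong refl)
    fix i
    have e: "y i + (t + of_int j) = (y i + t) + of_int j" by simp
    have "\<lfloor>y i + (t + of_int j)\<rfloor> = \<lfloor>y i + t\<rfloor> + j"
      unfolding e by (rule floor_add_int[symmetric])
    then show "int (L!i) * \<lfloor>y i + (t + of_int j)\<rfloor> = int (L!i) * \<lfloor>y i + t\<rfloor> + int (L!i) * j"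
      by (simp add: distrib_left)
  qed
  also have "\<dots> = G y t + (\<Sum>i<k. int (L!i)) * j"
    unfolding G_def by (simp add: sum.distrib sum_distrib_right)
  also have "\<dots> = G y t + j * int n" using n_eq_int by simp
  finally show ?thesis .
qed

lemma G_shift_one: "G y (t + 1) = G y t + int n"
  using G_shift_int[of y t 1] by simp

lemma G_cong: "(\<And>i. i < k \<Longrightarrow> y i = y' i) \<Longrightarrow> G y = G y'"
  unfolding G_def by (intro ext sum.cong) auto

lemma G_add_const: "G (\<lambda>i. y i + s) t = G y (t + s)"
  unfolding G_def by (simp add: algebra_simps)

lemma G_add_int: "G (\<lambda>i. y i + of_int (d i)) t = G y t + (\<Sum>i<k. int (L!i) * d i)"
proof -
  have "G (\<lambda>i. y i + of_int (d i)) t = (\<Sum>i<k. int (L!i) * \<lfloor>y i + t\<rfloor> + int (L!i) * d i)"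
    unfolding G_def
  proof (intro sum.cong refl)
    fix i
    have e: "y i + of_int (d i) + t = (y i + t) + of_int (d i)" by simp
    have "\<lfloor>y i + of_int (d i) + t\<rfloor> = \<lfloor>y i + t\<rfloor> + d i"
      unfolding e by (rule floor_add_int[symmetric])
    then show "int (L!i) * \<lfloor>y i + of_int (d i) + t\<rfloor> = int (L!i) * \<lfloor>y i + t\<rfloor> + int (L!i) * d i"
      by (simp add: distrib_left)
  qed
  also have "\<dots> = G y t + (\<Sum>i<k. int (L!i) * d i)"
    unfolding G_def by (rule sum.distrib)
  finally show ?thesis .
qed

lemma G_exists: "\<exists>t. w \<le> G y t"
proof -
  define j where "j = max 0 (w - G y 0)"
  have "G y (0 + of_int j) = G y 0 + j * int n" by (rule G_shift_int)
  moreover have "j * int n \<ge> j"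
  proof -
    have "j \<ge> 0" "int n \<ge> 1" using n_pos j_def by auto
    then have "j * 1 \<le> j * int n" by (intro mult_left_mono) auto
    then show ?thesis by simp
  qed
  ultimately have "G y (of_int j) \<ge> w" unfolding j_def by auto
  then show ?thesis by blast
qed

lemma G_lower: "w \<le> G y t \<Longrightarrow> t > - of_int \<bar>w - G y 0\<bar> - 1"
proof (rule ccontr)
  assume w: "w \<le> G y t" and "\<not> t > - of_int \<bar>w - G y 0\<bar> - 1"
  define b where "b = - \<bar>w - G y 0\<bar> - 1"
  have tb: "t \<le> of_int b" using \<open>\<not> _\<close> b_def by simp
  have "G y t \<le> G y (0 + of_int b)" using G_mono tb by simp
  also have "\<dots> = G y 0 + b * int n" by (rule G_shift_int)
  also have "\<dots> \<le> G y 0 + b"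
  proof -
    have "b * int n \<le> b * 1" using n_pos b_def
      by (intro mult_left_mono_neg) auto
    then show ?thesis by simp
  qed
  finally show False using w b_def by linarith
qed

lemma floor_right_const:
  "\<exists>b>a. \<forall>t. a \<le> t \<and> t < b \<longrightarrow> \<lfloor>c + t\<rfloor> = \<lfloor>c + a\<rfloor>"
proof -
  define b where "b = of_int \<lfloor>c + a\<rfloor> + 1 - c"
  have "b > a" unfolding b_def by linarith
  moreover have "\<forall>t. a \<le> t \<and> t < b \<longrightarrow> \<lfloor>c + t\<rfloor> = \<lfloor>c + a\<rfloor>"
    unfolding b_def by (auto simp: floor_eq_iff) linarith+
  ultimately show ?thesis by blast
qed

lemma G_right_const: "\<exists>b>a. \<forall>t. a \<le> t \<and> t < b \<longrightarrow> G y t = G y a"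
proof -
  have "\<forall>i\<in>{..<k}. \<exists>b>a. \<forall>t. a \<le> t \<and> t < b \<longrightarrow> \<lfloor>y i + t\<rfloor> = \<lfloor>y i + a\<rfloor>"
    using floor_right_const by blast
  from bchoice[OF this] obtain bb where bb: "\<forall>i\<in>{..<k}. bb i > a \<and> (\<forall>t. a \<le> t \<and> t < bb i \<longrightarrow> \<lfloor>y i + t\<rfloor> = \<lfloor>y i + a\<rfloor>)"
    by blast
  define b where "b = Min (bb ` {..<k})"
  have "(0::nat) < 2" by simp
  then have "0 < k" using len2 by (rule less_le_trans)
  then have "0 \<in> {..<k}" by (rule lessThan_iff[THEN iffD2])
  then have ne2: "bb ` {..<k} \<noteq> {}" by blast
  have fin: "finite (bb ` {..<k})" by simp
  have "b \<in> bb ` {..<k}" unfolding b_def using fin ne2 by (rule Min_in)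
  then obtain i0 where "i0 \<in> {..<k}" "b = bb i0" by blast
  then have "b > a" using bb by blast
  moreover have "\<forall>t. a \<le> t \<and> t < b \<longrightarrow> G y t = G y a"
  proof (intro allI impI)
    fix t assume t: "a \<le> t \<and> t < b"
    show "G y t = G y a" unfolding G_def
    proof (rule sum.cong[OF refl])
      fix i assume i: "i \<in> {..<k}"
      have "b \<le> bb i" unfolding b_def using fin i by (intro Min_le) auto
      then have "t < bb i" using t by linarith
      then have "\<lfloor>y i + t\<rfloor> = \<lfloor>y i + a\<rfloor>" using bb i t by blast
      then show "int (L!i) * \<lfloor>y i + t\<rfloor> = int (L!i) * \<lfloor>y i + a\<rfloor>" by simp
    qed
  qed
  ultimately show ?thesis by blast
qed

definition alpha :: "(nat \<Rightarrow> real) \<Rightarrow> int \<Rightarrow> real" where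
  "alpha y w = Inf {t. w \<le> G y t}"

lemma alpha_bdd: "bdd_below {t. w \<le> G y t}"
  by (rule bdd_belowI[of _ "- of_int \<bar>w - G y 0\<bar> - 1"]) (auto dest: G_lower intro: less_imp_le)

lemma alpha_attained: "w \<le> G y (alpha y w)"
proof (rule ccontr)
  assume ng: "\<not> w \<le> G y (alpha y w)"
  obtain b where b1: "b > alpha y w" and b2: "\<And>t. alpha y w \<le> t \<Longrightarrow> t < b \<Longrightarrow> G y t = G y (alpha y w)"
    using G_right_const[of "alpha y w" y] by blast
  obtain t0 where "w \<le> G y t0" using G_exists by blast
  then have ne: "{t. w \<le> G y t} \<noteq> {}" by blast
  have "Inf {t. w \<le> G y t} < b" using b1 unfolding alpha_def .
  then obtain t where t1: "t \<in> {t. w \<le> G y t}" and t2: "t < b"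
    using cInf_lessD[OF ne] by blast
  have "alpha y w \<le> t" unfolding alpha_def using t1 alpha_bdd by (rule cInf_lower)
  then have "G y t = G y (alpha y w)" using b2 t2 by blast
  then show False using ng t1 by simp
qed

lemma alpha_le_iff: "w \<le> G y t \<longleftrightarrow> alpha y w \<le> t"
proof
  assume "w \<le> G y t" then show "alpha y w \<le> t"
    unfolding alpha_def using alpha_bdd by (intro cInf_lower) auto
next
  assume "alpha y w \<le> t"
  then have "G y (alpha y w) \<le> G y t" by (rule G_mono)
  then show "w \<le> G y t" using alpha_attained[of w y] by linarith
qed

lemma alpha_unique: "(\<And>t. w \<le> G y t \<longleftrightarrow> a \<le> t) \<Longrightarrow> alpha y w = a"
proof -
  assume a: "\<And>t. w \<le> G y t \<longleftrightarrow> a \<le> t"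
  have "alpha y w \<le> a" using a[of a] alpha_le_iff by blast
  moreover have "a \<le> alpha y w" using a[of "alpha y w"] alpha_attained by blast
  ultimately show ?thesis by linarith
qed

lemma alpha_mono: "w \<le> w' \<Longrightarrow> alpha y w \<le> alpha y w'"
proof -
  assume "w \<le> w'"
  then have "w \<le> G y (alpha y w')" using alpha_attained[of w' y] by linarith
  then show ?thesis by (simp add: alpha_le_iff)
qed

lemma alpha_period: "alpha y (w + j * int n) = alpha y w + of_int j"
proof (rule alpha_unique)
  fix t
  have "G y t = G y (t - of_int j) + j * int n"
    using G_shift_int[of y "t - of_int j" j] by simp
  then show "w + j * int n \<le> G y t \<longleftrightarrow> alpha y w + of_int j \<le> t"
    using alpha_le_iff[of w y "t - of_int j"] by auto
qed

lemma alpha_cong: assumes "\<And>i. i < k \<Longrightarrow> y i = y' i" shows "alpha y = alpha y'"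
  using G_cong[OF assms] by (simp add: alpha_def[abs_def])

lemma alpha_add_const: "alpha (\<lambda>i. y i + s) w = alpha y w - s"
proof (rule alpha_unique)
  fix t
  show "w \<le> G (\<lambda>i. y i + s) t \<longleftrightarrow> alpha y w - s \<le> t"
    unfolding G_add_const alpha_le_iff by linarith
qed

lemma alpha_add_int:
  "alpha (\<lambda>i. y i + of_int (d i)) w = alpha y (w - (\<Sum>i<k. int (L!i) * d i))"
proof (rule alpha_unique)
  fix t
  show "w \<le> G (\<lambda>i. y i + of_int (d i)) t \<longleftrightarrow> alpha y (w - (\<Sum>i<k. int (L!i) * d i)) \<le> t"
    unfolding G_add_int alpha_le_iff[symmetric] by linarith
qed

lemma G_lip: "(\<And>i. i < k \<Longrightarrow> y i \<le> y' i + \<delta>) \<Longrightarrow> G y t \<le> G y' (t + \<delta>)"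
  unfolding G_def by (intro sum_mono mult_left_mono floor_mono) (auto simp: algebra_simps)

lemma alpha_lip1: "(\<And>i. i < k \<Longrightarrow> y i \<le> y' i + \<delta>) \<Longrightarrow> alpha y' w \<le> alpha y w + \<delta>"
proof -
  assume a: "\<And>i. i < k \<Longrightarrow> y i \<le> y' i + \<delta>"
  have "w \<le> G y (alpha y w)" by (rule alpha_attained)
  also have "\<dots> \<le> G y' (alpha y w + \<delta>)" by (rule G_lip[OF a])
  finally show ?thesis by (simp add: alpha_le_iff)
qed

lemma alpha_lip: "(\<And>i. i < k \<Longrightarrow> \<bar>y i - y' i\<bar> \<le> \<delta>) \<Longrightarrow> \<bar>alpha y w - alpha y' w\<bar> \<le> \<delta>"
proof -
  assume a: "\<And>i. i < k \<Longrightarrow> \<bar>y i - y' i\<bar> \<le> \<delta>"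
  have "alpha y' w \<le> alpha y w + \<delta>" by (rule alpha_lip1) (use a in force)
  moreover have "alpha y w \<le> alpha y' w + \<delta>" by (rule alpha_lip1) (use a in force)
  ultimately show ?thesis by linarith
qed

definition F0 :: "(nat \<Rightarrow> real) \<Rightarrow> nat \<Rightarrow> real" where
  "F0 y v = (if v < n then alpha y (int v + 1) - alpha y (int v) else 0)"

lemma F0_mod: "F0 y (nat (w mod int n)) = alpha y (w + 1) - alpha y w"
proof -
  have np: "int n > 0" using n_pos by simp
  define r where "r = w mod int n"
  define j where "j = w div int n"
  have r: "0 \<le> r" "r < int n" using np r_def by auto
  have w: "w = r + j * int n" unfolding r_def j_def by simp
  have "nat r < n" using r by auto
  then have "F0 y (nat r) = alpha y (r + 1) - alpha y r" unfolding F0_def using r by simp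
  also have "\<dots> = alpha y ((r+1) + j * int n) - alpha y (r + j * int n)"
    by (simp only: alpha_period)
  also have "(r+1) + j * int n = w + 1" using w by simp
  also have "r + j * int n = w" using w by simp
  finally have "F0 y (nat r) = alpha y (w + 1) - alpha y w" .
  then show ?thesis unfolding r_def .
qed

end


lemma sort_perm:
  fixes f :: "nat \<Rightarrow> real"
  shows "\<exists>\<sigma>. \<sigma> permutes {..<m} \<and> (\<forall>a b. a \<le> b \<longrightarrow> b < m \<longrightarrow> f (\<sigma> a) \<le> f (\<sigma> b))"
proof -
  define xs where "xs = sort_key f [0..<m]"
  have d: "distinct xs" and len: "length xs = m" and st: "set xs = {..<m}" and so: "sorted (map f xs)"
    unfolding xs_def by (auto simp: atLeast0LessThan)
  define \<sigma> where "\<sigma> j = (if j < m then xs!j else j)" for j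
  have "bij_betw ((!) xs) {..<m} {..<m}" using bij_betw_nth[OF d] len st by simp
  moreover have "\<And>a. a \<in> {..<m} \<Longrightarrow> \<sigma> a = xs ! a" unfolding \<sigma>_def by simp
  ultimately have "bij_betw \<sigma> {..<m} {..<m}" using bij_betw_cong[of "{..<m}" \<sigma> "(!) xs" "{..<m}"] by simp
  then have "\<sigma> permutes {..<m}" by (rule bij_imp_permutes) (simp add: \<sigma>_def)
  moreover have "\<forall>a b. a \<le> b \<longrightarrow> b < m \<longrightarrow> f (\<sigma> a) \<le> f (\<sigma> b)"
  proof (intro allI impI)
    fix a b assume ab: "a \<le> b" "b < m"
    have "map f xs ! a \<le> map f xs ! b" using sorted_nth_mono[OF so ab(1)] ab len by simp
    then show "f (\<sigma> a) \<le> f (\<sigma> b)" using ab len unfolding \<sigma>_def by simp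
  qed
  ultimately show ?thesis by blast
qed

lemma downset_eq:
  fixes A :: "nat set"
  assumes sub: "A \<subseteq> {..<m}" and dc: "\<And>a b. a \<le> b \<Longrightarrow> b \<in> A \<Longrightarrow> a \<in> A"
  shows "A = {..<card A}"
proof (cases "A = {}")
  case True then show ?thesis by simp
next
  case False
  have fin: "finite A" using sub finite_subset by blast
  define M where "M = Max A"
  have MA: "M \<in> A" unfolding M_def using fin False by simp
  have "A = {..M}"
  proof
    show "A \<subseteq> {..M}" unfolding M_def using fin by auto
    show "{..M} \<subseteq> A" using dc MA by auto
  qed
  then show ?thesis by auto
qed

context tonn begin

lemma k_pos: "0 < k"
proof -
  have "(0::nat) < 2" by simp
  then show ?thesis using len2 by (rule less_le_trans)
qed

definition P :: "(nat \<Rightarrow> nat) \<Rightarrow> nat \<Rightarrow> nat" where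
  "P \<sigma> m = (\<Sum>j<m. L!(\<sigma> j))"

definition FS :: "nat \<Rightarrow> (nat \<Rightarrow> nat) \<Rightarrow> nat set" where
  "FS x \<sigma> = {(x + P \<sigma> m) mod n | m. m < k}"

lemma FS_facet: "x < n \<Longrightarrow> \<sigma> permutes {..<k} \<Longrightarrow> FS x \<sigma> \<in> tonn_facets L"
  unfolding tonn_facets_def FS_def P_def by blast

lemma P_k: assumes "\<sigma> permutes {..<k}" shows "P \<sigma> k = n"
proof -
  have "P \<sigma> k = (\<Sum>j<k. L!(\<sigma> j))" unfolding P_def ..
  also have "\<dots> = (\<Sum>i<k. L!i)"
    using sum.permute[OF assms, of "\<lambda>i. L!i"] by (simp add: comp_def)
  finally show ?thesis using n_eq by simp
qed

lemma P_mono_strict: assumes "\<sigma> permutes {..<k}" "a < b" "b \<le> k" shows "P \<sigma> a < P \<sigma> b"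
proof -
  have "P \<sigma> b = P \<sigma> a + (\<Sum>j\<in>{a..<b}. L!(\<sigma> j))"
    unfolding P_def using assms(2) by (metis le_less sum.lessThan_Suc ivl_disj_un(2) sum_up_index_split
        add_diff_inverse_nat not_less sum.atLeastLessThan_concat lessThan_atLeast0 zero_le)
  moreover have "L!(\<sigma> a) > 0"
    using Lpos permutes_in_image[OF assms(1)] assms by auto
  moreover have "L!(\<sigma> a) \<le> (\<Sum>j\<in>{a..<b}. L!(\<sigma> j))"
    using assms by (intro member_le_sum) auto
  ultimately show ?thesis by linarith
qed

lemma P_lt_n: assumes "\<sigma> permutes {..<k}" "m < k" shows "P \<sigma> m < n"
  using P_mono_strict[OF assms(1) assms(2)] P_k[OF assms(1)] by simp

lemma floor_frac_window:
  fixes c t :: real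
  assumes "0 \<le> t" "t < 1"
  shows "\<lfloor>c + t\<rfloor> = \<lfloor>c\<rfloor> + (if 1 - frac c \<le> t then 1 else 0)"
  using assms unfolding frac_def by (auto simp: floor_eq_iff) linarith+

lemma G_window:
  assumes "0 \<le> t" "t < 1"
  shows "G y t = G y 0 + (\<Sum>i\<in>{i. i < k \<and> 1 - frac (y i) \<le> t}. int (L!i))"
proof -
  have "G y t = (\<Sum>i<k. int (L!i) * \<lfloor>y i\<rfloor> + (if 1 - frac (y i) \<le> t then int (L!i) else 0))"
    unfolding G_def by (intro sum.cong refl) (simp add: floor_frac_window[OF assms] distrib_left)
  also have "\<dots> = G y 0 + (\<Sum>i<k. if 1 - frac (y i) \<le> t then int (L!i) else 0)"
    unfolding G_def by (simp add: sum.distrib)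
  also have "(\<Sum>i<k. if 1 - frac (y i) \<le> t then int (L!i) else 0) = (\<Sum>i\<in>{i. i < k \<and> 1 - frac (y i) \<le> t}. int (L!i))"
    by (subst sum.inter_filter[symmetric]) (auto intro: sum.cong)
  finally show ?thesis .
qed

lemma nat_mod_helper:
  fixes g j :: int and p :: nat
  shows "nat ((g + int p + j * int n) mod int n) = (nat (g mod int n) + p) mod n"
proof -
  have np: "int n > 0" using n_pos by simp
  have "(g + int p + j * int n) mod int n = (g mod int n + int p) mod int n"
    by (metis mod_add_left_eq mod_mult_self1)
  also have "g mod int n = int (nat (g mod int n))" using np by simp
  finally have "(g + int p + j * int n) mod int n = int ((nat (g mod int n) + p) mod n)"
    by (simp add: zmod_int)
  then show ?thesis by simp
qed

lemma G_in_facet: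
  assumes \<sigma>: "\<sigma> permutes {..<k}"
    and so: "\<And>a b. a \<le> b \<Longrightarrow> b < k \<Longrightarrow> 1 - frac (y (\<sigma> a)) \<le> 1 - frac (y (\<sigma> b))"
  shows "nat (G y t mod int n) \<in> FS (nat (G y 0 mod int n)) \<sigma>"
proof -
  define t' where "t' = t - of_int \<lfloor>t\<rfloor>"
  have t': "0 \<le> t'" "t' < 1" unfolding t'_def by linarith+
  have Gt: "G y t = G y t' + \<lfloor>t\<rfloor> * int n"
    using G_shift_int[of y t' "\<lfloor>t\<rfloor>"] unfolding t'_def by simp
  define A where "A = {j. j < k \<and> 1 - frac (y (\<sigma> j)) \<le> t'}"
  have Asub: "A \<subseteq> {..<k}" unfolding A_def by auto
  have "A = {..<card A}"
  proof (rule downset_eq[OF Asub])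
    fix a b assume "a \<le> b" "b \<in> A"
    then show "a \<in> A" unfolding A_def using so[of a b] by auto
  qed
  define m where "m = card A"
  have mk: "m \<le> k" unfolding m_def using Asub card_mono[of "{..<k}" A] by simp
  have img: "{i. i < k \<and> 1 - frac (y i) \<le> t'} = \<sigma> ` A"
  proof
    show "{i. i < k \<and> 1 - frac (y i) \<le> t'} \<subseteq> \<sigma> ` A"
    proof
      fix i assume i: "i \<in> {i. i < k \<and> 1 - frac (y i) \<le> t'}"
      then have "i \<in> \<sigma> ` {..<k}" using permutes_image[OF \<sigma>] by simp
      then obtain j where "j < k" "\<sigma> j = i" by auto
      then show "i \<in> \<sigma> ` A" using i unfolding A_def by auto
    qed
    show "\<sigma> ` A \<subseteq> {i. i < k \<and> 1 - frac (y i) \<le> t'}"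
      unfolding A_def using permutes_in_image[OF \<sigma>] by auto
  qed
  have injA: "inj_on \<sigma> A" using permutes_inj[OF \<sigma>] by (simp add: inj_on_def)
  have "(\<Sum>i\<in>{i. i < k \<and> 1 - frac (y i) \<le> t'}. int (L!i)) = (\<Sum>j\<in>A. int (L!(\<sigma> j)))"
    unfolding img by (simp add: sum.reindex[OF injA])
  also have "\<dots> = int (P \<sigma> m)" unfolding P_def m_def
    by (subst \<open>A = {..<card A}\<close>) simp
  finally have Gt': "G y t' = G y 0 + int (P \<sigma> m)" using G_window[OF t'] by simp
  have eq: "nat (G y t mod int n) = (nat (G y 0 mod int n) + P \<sigma> m) mod n"
    unfolding Gt Gt' by (rule nat_mod_helper)
  show ?thesis
  proof (cases "m < k")
    case True then show ?thesis unfolding eq FS_def by blast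
  next
    case False
    then have "m = k" using mk by simp
    then have "P \<sigma> m = n" using P_k[OF \<sigma>] by simp
    then have "nat (G y t mod int n) = (nat (G y 0 mod int n) + P \<sigma> 0) mod n"
      unfolding eq by (simp add: P_def)
    moreover have "0 < k" by (rule k_pos)
    ultimately show ?thesis unfolding FS_def by blast
  qed
qed

lemma F0_nonneg: "0 \<le> F0 y v"
  unfolding F0_def using alpha_mono[of "int v" "int v + 1" y] by simp

lemma F0_support: assumes "F0 y v \<noteq> 0" shows "v < n" "G y (alpha y (int v)) = int v"
proof -
  show v: "v < n" using assms unfolding F0_def by (auto split: if_splits)
  have "alpha y (int v) \<noteq> alpha y (int v + 1)" using assms v unfolding F0_def by auto
  then have lt: "alpha y (int v) < alpha y (int v + 1)" using alpha_mono[of "int v" "int v + 1" y] by simp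
  have "int v \<le> G y (alpha y (int v))" by (rule alpha_attained)
  moreover have "\<not> int v + 1 \<le> G y (alpha y (int v))" using lt alpha_le_iff by (simp add: not_le)
  ultimately show "G y (alpha y (int v)) = int v" by simp
qed

lemma F0_sum: "(\<Sum>v<n. F0 y v) = 1"
proof -
  have "(\<Sum>v<n. F0 y v) = (\<Sum>v<n. alpha y (int (Suc v)) - alpha y (int v))"
    unfolding F0_def by (intro sum.cong) (auto simp: add.commute)
  also have "\<dots> = alpha y (int n) - alpha y (int 0)" by (rule sum_lessThan_telescope)
  also have "alpha y (int n) = alpha y 0 + 1" using alpha_period[of y 0 1] by simp
  finally show ?thesis by simp
qed

lemma F0_in_X: "F0 y \<in> geom_realization (tonnetz L)"
proof -
  obtain \<sigma> where \<sigma>: "\<sigma> permutes {..<k}"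
    and so: "\<And>a b. a \<le> b \<Longrightarrow> b < k \<Longrightarrow> 1 - frac (y (\<sigma> a)) \<le> 1 - frac (y (\<sigma> b))"
    using sort_perm[of k "\<lambda>i. 1 - frac (y i)"] by blast
  define x0 where "x0 = nat (G y 0 mod int n)"
  have x0: "x0 < n" unfolding x0_def using n_pos by (simp add: nat_less_iff)
  define S where "S = FS x0 \<sigma>"
  have fac: "S \<in> tonn_facets L" unfolding S_def using FS_facet[OF x0 \<sigma>] .
  have "0 < k" by (rule k_pos)
  then have "S \<noteq> {}" unfolding S_def FS_def by blast
  then have St: "S \<in> tonnetz L" unfolding tonnetz_def using fac by blast
  have fin: "finite S" unfolding S_def FS_def by simp
  have supp: "{i. F0 y i \<noteq> 0} \<subseteq> S"
  proof
    fix v assume "v \<in> {i. F0 y i \<noteq> 0}"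
    then have "F0 y v \<noteq> 0" by simp
    note s = F0_support[OF this]
    have "nat (G y (alpha y (int v)) mod int n) \<in> S"
      unfolding S_def x0_def by (rule G_in_facet[of \<sigma> y, OF \<sigma> so])
    then show "v \<in> S" using s by simp
  qed
  have Sn: "S \<subseteq> {..<n}" unfolding S_def FS_def using n_pos by auto
  have "sum (F0 y) S = (\<Sum>v<n. F0 y v)"
    by (rule sum.mono_neutral_left) (use Sn supp in auto)
  then have "sum (F0 y) S = 1" using F0_sum by simp
  then show ?thesis unfolding geom_realization_def using F0_nonneg St fin supp by blast
qed

end


locale tonn_gr = tonn +
  assumes gen: "generic L" and red: "reduced L"
begin

lemma alpha_const_diff:
  assumes d: "\<And>w. alpha y' (w+1) - alpha y' w = alpha y (w+1) - alpha y w"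
  shows "alpha y' w = alpha y w + (alpha y' 0 - alpha y 0)"
proof (induction w rule: int_induct[where k=0])
  case base then show ?case by simp
next
  case (step1 i) then show ?case using d[of i] by linarith
next
  case (step2 i)
  have e: "alpha y' (i - 1 + 1) = alpha y' i" "alpha y (i - 1 + 1) = alpha y i" by simp_all
  then show ?case using step2 d[of "i - 1"] by linarith
qed

lemma floor_left:
  fixes c t0 :: real
  shows "\<exists>b<t0. \<forall>t. b < t \<and> t < t0 \<longrightarrow> \<lfloor>c + t\<rfloor> = \<lfloor>c + t0\<rfloor> - (if c + t0 \<in> \<int> then 1 else 0)"
proof (cases "c + t0 \<in> \<int>")
  case True
  then obtain z where z: "c + t0 = of_int z" by (auto elim: Ints_cases)
  have "\<forall>t. t0 - 1 < t \<and> t < t0 \<longrightarrow> \<lfloor>c + t\<rfloor> = \<lfloor>c + t0\<rfloor> - 1"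
  proof (intro allI impI)
    fix t assume "t0 - 1 < t \<and> t < t0"
    then have "of_int (z - 1) \<le> c + t" "c + t < of_int (z - 1) + 1" using z by auto
    then have "\<lfloor>c + t\<rfloor> = z - 1" by (simp add: floor_eq_iff)
    then show "\<lfloor>c + t\<rfloor> = \<lfloor>c + t0\<rfloor> - 1" using z by simp
  qed
  then show ?thesis using True by (intro exI[of _ "t0 - 1"]) auto
next
  case False
  then have fp: "frac (c + t0) > 0" using frac_ge_0[of "c + t0"] frac_eq_0_iff[of "c + t0"] by linarith
  have "\<forall>t. t0 - frac (c + t0) < t \<and> t < t0 \<longrightarrow> \<lfloor>c + t\<rfloor> = \<lfloor>c + t0\<rfloor>"
  proof (intro allI impI)
    fix t assume "t0 - frac (c + t0) < t \<and> t < t0"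
    then have "of_int \<lfloor>c + t0\<rfloor> \<le> c + t" "c + t < of_int \<lfloor>c + t0\<rfloor> + 1"
      unfolding frac_def by linarith+
    then show "\<lfloor>c + t\<rfloor> = \<lfloor>c + t0\<rfloor>" by (simp add: floor_eq_iff)
  qed
  then show ?thesis using False fp by (intro exI[of _ "t0 - frac (c + t0)"]) auto
qed

lemma G_left:
  "\<exists>b<t0. \<forall>t. b < t \<and> t < t0 \<longrightarrow> G y t = G y t0 - (\<Sum>i\<in>{i. i < k \<and> y i + t0 \<in> \<int>}. int (L!i))"
proof -
  have "\<forall>i\<in>{..<k}. \<exists>b<t0. \<forall>t. b < t \<and> t < t0 \<longrightarrow> \<lfloor>y i + t\<rfloor> = \<lfloor>y i + t0\<rfloor> - (if y i + t0 \<in> \<int> then 1 else 0)"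
    using floor_left by blast
  from bchoice[OF this] obtain bb where bb: "\<forall>i\<in>{..<k}. bb i < t0 \<and> (\<forall>t. bb i < t \<and> t < t0 \<longrightarrow> \<lfloor>y i + t\<rfloor> = \<lfloor>y i + t0\<rfloor> - (if y i + t0 \<in> \<int> then 1 else 0))"
    by blast
  define b where "b = Max (bb ` {..<k})"
  have "(0::nat) < 2" by simp
  then have "0 < k" using len2 by (rule less_le_trans)
  then have "0 \<in> {..<k}" by (rule lessThan_iff[THEN iffD2])
  then have ne2: "bb ` {..<k} \<noteq> {}" by blast
  have fin: "finite (bb ` {..<k})" by simp
  have "b \<in> bb ` {..<k}" unfolding b_def using fin ne2 by (rule Max_in)
  then obtain i0 where "i0 \<in> {..<k}" "b = bb i0" by blast
  then have "b < t0" using bb by blast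
  moreover have "\<forall>t. b < t \<and> t < t0 \<longrightarrow> G y t = G y t0 - (\<Sum>i\<in>{i. i < k \<and> y i + t0 \<in> \<int>}. int (L!i))"
  proof (intro allI impI)
    fix t assume t: "b < t \<and> t < t0"
    have "G y t = (\<Sum>i<k. int (L!i) * \<lfloor>y i + t0\<rfloor> - (if y i + t0 \<in> \<int> then int (L!i) else 0))"
      unfolding G_def
    proof (rule sum.cong[OF refl])
      fix i assume i: "i \<in> {..<k}"
      have "bb i \<le> b" unfolding b_def using fin i by (intro Max_ge) auto
      then have "bb i < t" using t by linarith
      then have "\<lfloor>y i + t\<rfloor> = \<lfloor>y i + t0\<rfloor> - (if y i + t0 \<in> \<int> then 1 else 0)" using bb i t by blast
      then show "int (L!i) * \<lfloor>y i + t\<rfloor> = int (L!i) * \<lfloor>y i + t0\<rfloor> - (if y i + t0 \<in> \<int> then int (L!i) else 0)"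
        by (simp add: right_diff_distrib)
    qed
    also have "\<dots> = G y t0 - (\<Sum>i<k. if y i + t0 \<in> \<int> then int (L!i) else 0)"
      unfolding G_def by (simp add: sum_subtractf)
    also have "(\<Sum>i<k. if y i + t0 \<in> \<int> then int (L!i) else 0) = (\<Sum>i\<in>{i. i < k \<and> y i + t0 \<in> \<int>}. int (L!i))"
      by (subst sum.inter_filter[symmetric]) (auto intro: sum.cong)
    finally show "G y t = G y t0 - (\<Sum>i\<in>{i. i < k \<and> y i + t0 \<in> \<int>}. int (L!i))" .
  qed
  ultimately show ?thesis by blast
qed

lemma G_eq_imp_int:
  assumes eq: "G y = G z" and i: "i < k"
  shows "z i - y i \<in> \<int>"
proof -
  define t0 where "t0 = - y i"
  define I where "I = {j. j < k \<and> y j + t0 \<in> \<int>}"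
  define J where "J = {j. j < k \<and> z j + t0 \<in> \<int>}"
  obtain b1 where b1: "b1 < t0" "\<forall>t. b1 < t \<and> t < t0 \<longrightarrow> G y t = G y t0 - (\<Sum>j\<in>I. int (L!j))"
    unfolding I_def using G_left by blast
  obtain b2 where b2: "b2 < t0" "\<forall>t. b2 < t \<and> t < t0 \<longrightarrow> G z t = G z t0 - (\<Sum>j\<in>J. int (L!j))"
    unfolding J_def using G_left by blast
  define t where "t = (max b1 b2 + t0) / 2"
  have t: "b1 < t" "b2 < t" "t < t0" unfolding t_def using b1(1) b2(1) by auto
  have e1: "G y t = G y t0 - (\<Sum>j\<in>I. int (L!j))" using b1(2) t by blast
  have e2: "G z t = G z t0 - (\<Sum>j\<in>J. int (L!j))" using b2(2) t by blast
  have "(\<Sum>j\<in>I. int (L!j)) = (\<Sum>j\<in>J. int (L!j))"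
    using e1 e2 eq by simp
  then have "(\<Sum>j\<in>I. L!j) = (\<Sum>j\<in>J. L!j)" by (simp flip: of_nat_sum)
  moreover have "I \<subseteq> {..<length L}" "J \<subseteq> {..<length L}" unfolding I_def J_def by auto
  moreover have "\<forall>I J. I \<subseteq> {..<length L} \<and> J \<subseteq> {..<length L} \<and>
      (\<Sum>i\<in>I. L ! i) = (\<Sum>j\<in>J. L ! j) \<longrightarrow> I = J" using gen unfolding generic_def .
  ultimately have "I = J" by blast
  moreover have "i \<in> I" unfolding I_def t0_def using i by simp
  ultimately have "z i + t0 \<in> \<int>" unfolding J_def by blast
  then show ?thesis unfolding t0_def by simp
qed

lemma F0_inj:
  assumes eq: "F0 y = F0 y'"
  shows "\<exists>s d. (\<forall>i<k. y' i = y i + s + of_int (d i)) \<and> (\<Sum>i<k. int (L!i) * d i) = 0"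
proof -
  have d: "alpha y' (w+1) - alpha y' w = alpha y (w+1) - alpha y w" for w
    using F0_mod[of y w] F0_mod[of y' w] eq by simp
  define c where "c = alpha y' 0 - alpha y 0"
  define z where "z = (\<lambda>i. y' i + c)"
  have az: "alpha z w = alpha y w" for w
    unfolding z_def alpha_add_const using alpha_const_diff[OF d, of w] c_def by simp
  have Gz: "G z = G y"
  proof
    fix t
    have "G y t \<le> G z t" using alpha_le_iff[of "G y t" z t] alpha_le_iff[of "G y t" y t] az by simp
    moreover have "G z t \<le> G y t" using alpha_le_iff[of "G z t" z t] alpha_le_iff[of "G z t" y t] az by simp
    ultimately show "G z t = G y t" by simp
  qed
  define d where "d i = \<lfloor>z i - y i\<rfloor>" for i
  have zi: "z i = y i + of_int (d i)" if "i < k" for i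
  proof -
    have "z i - y i \<in> \<int>" using G_eq_imp_int[OF Gz[symmetric] that] .
    then obtain m where m: "z i - y i = of_int m" unfolding Ints_def by blast
    then have "of_int \<lfloor>z i - y i\<rfloor> = z i - y i" by simp
    then show ?thesis unfolding d_def by linarith
  qed
  have "G z 0 = G (\<lambda>i. y i + of_int (d i)) 0" using zi by (intro fun_cong[OF G_cong]) auto
  also have "\<dots> = G y 0 + (\<Sum>i<k. int (L!i) * d i)" by (rule G_add_int)
  finally have sd: "(\<Sum>i<k. int (L!i) * d i) = 0" using Gz by simp
  have "\<forall>i<k. y' i = y i + (- c) + of_int (d i)"
    using zi unfolding z_def by (auto simp: algebra_simps)
  then show ?thesis using sd by blast
qed

end


lemma bezout_list: "\<exists>d::nat\<Rightarrow>int. (\<Sum>i<length xs. int (xs!i) * d i) = int (Gcd (set xs))"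
proof (induction xs)
  case Nil then show ?case by simp
next
  case (Cons a xs)
  then obtain d where d: "(\<Sum>i<length xs. int (xs!i) * d i) = int (Gcd (set xs))" by blast
  obtain u v where uv: "u * int a + v * int (Gcd (set xs)) = gcd (int a) (int (Gcd (set xs)))"
    using bezout_int by blast
  define d' where "d' i = (if i = 0 then u else v * d (i - 1))" for i
  have "(\<Sum>i<length (a # xs). int ((a # xs)!i) * d' i) = int a * u + (\<Sum>i<length xs. int (xs!i) * (v * d i))"
    unfolding length_Cons sum.lessThan_Suc_shift by (simp add: d'_def)
  also have "(\<Sum>i<length xs. int (xs!i) * (v * d i)) = v * (\<Sum>i<length xs. int (xs!i) * d i)"
    by (simp add: sum_distrib_left mult.left_commute)
  finally have "(\<Sum>i<length (a # xs). int ((a # xs)!i) * d' i) = int (gcd a (Gcd (set xs)))"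
    using d uv by (simp add: mult.commute)
  then show ?case by auto
qed

lemma step_exists:
  fixes f :: "nat \<Rightarrow> nat"
  shows "f 0 \<le> r \<Longrightarrow> r < f K \<Longrightarrow> \<exists>m<K. f m \<le> r \<and> r < f (Suc m)"
proof (induction K)
  case 0 then show ?case by simp
next
  case (Suc K)
  show ?case
  proof (cases "r < f K")
    case True then show ?thesis using Suc by (metis less_Suc_eq)
  next
    case False then show ?thesis using Suc by (intro exI[of _ K]) auto
  qed
qed

lemma mod_small_cancel:
  fixes x0 a b N :: nat
  assumes "x0 < N" "a < N" "b < N" "(x0 + a) mod N = (x0 + b) mod N"
  shows "a = b"
proof -
  have h: "c mod N = (if c < N then c else c - N)" if "c < 2 * N" for c
  proof (cases "c < N")
    case True then show ?thesis by simp
  next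
    case False
    then have "c mod N = (c - N) mod N" by (simp add: le_mod_geq)
    also have "\<dots> = c - N" using that False by simp
    finally show ?thesis using False by simp
  qed
  have "(x0 + a) mod N = (if x0 + a < N then x0 + a else x0 + a - N)" using assms by (intro h) auto
  moreover have "(x0 + b) mod N = (if x0 + b < N then x0 + b else x0 + b - N)" using assms by (intro h) auto
  ultimately show ?thesis using assms by (auto split: if_splits)
qed

context tonn_gr begin

lemma bezout_L: "\<exists>d::nat\<Rightarrow>int. (\<Sum>i<k. int (L!i) * d i) = 1"
  using bezout_list[of L] red unfolding reduced_def by simp

lemma P_mono: assumes "\<sigma> permutes {..<k}" "a \<le> b" "b \<le> k" shows "P \<sigma> a \<le> P \<sigma> b"
  using P_mono_strict[OF assms(1), of a b] assms by (cases "a = b") auto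

lemma floor_window2:
  fixes e :: int and c t :: real
  assumes "0 \<le> c" "c \<le> 1" "0 \<le> t" "t < 1"
  shows "\<lfloor>of_int e - c + t\<rfloor> = e - 1 + (if c \<le> t then 1 else 0)"
  using assms by (auto simp: floor_eq_iff)

lemma P_less_imp: assumes "\<sigma> permutes {..<k}" "P \<sigma> a < P \<sigma> b" "a \<le> k" "b \<le> k" shows "a < b"
proof (rule ccontr)
  assume "\<not> a < b"
  then have "P \<sigma> b \<le> P \<sigma> a" using P_mono[OF assms(1)] assms by simp
  then show False using assms(2) by simp
qed

lemma P_zero: "P \<sigma> 0 = 0" unfolding P_def by simp

lemma surj_facet:
  assumes x0: "x0 < n" and \<sigma>: "\<sigma> permutes {..<k}"
    and xnn: "\<And>i. 0 \<le> x i"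
    and supp: "\<And>v. x v \<noteq> 0 \<Longrightarrow> v \<in> FS x0 \<sigma>"
    and sum1: "(\<Sum>m<k. x ((x0 + P \<sigma> m) mod n)) = 1"
  shows "\<exists>y. F0 y = x"
proof -
  define vv where "vv m = (x0 + P \<sigma> m) mod n" for m
  define c where "c m = (\<Sum>j<Suc m. x (vv j))" for m
  have c_mono: "c a \<le> c b" if "a \<le> b" for a b
    unfolding c_def using that xnn by (intro sum_mono2) auto
  have c_nn: "0 \<le> c m" for m unfolding c_def using xnn by (intro sum_nonneg) auto
  have kk: "Suc (k - 1) = k" using k_pos by simp
  have c_last: "c (k - 1) = 1" unfolding c_def kk using sum1 vv_def by simp
  have c_le1: "c m \<le> 1" if "m < k" for m using c_mono[of m "k - 1"] that c_last by simp
  have c_Suc: "c (Suc m) = c m + x (vv (Suc m))" for m unfolding c_def by simp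
  have c_0: "c 0 = x (vv 0)" unfolding c_def by simp
  obtain dz where dz: "(\<Sum>i<k. int (L!i) * dz i) = 1" using bezout_L by blast
  define e where "e i = (int x0 + int n) * dz i" for i
  have E: "(\<Sum>i<k. int (L!i) * e i) = int x0 + int n"
  proof -
    have "(\<Sum>i<k. int (L!i) * e i) = (int x0 + int n) * (\<Sum>i<k. int (L!i) * dz i)"
      unfolding e_def by (simp add: sum_distrib_left mult_ac)
    then show ?thesis using dz by simp
  qed
  define y where "y i = of_int (e i) - c (inv \<sigma> i)" for i
  have invs: "inv \<sigma> (\<sigma> j) = j" for j using permutes_inverses(2)[OF \<sigma>] by simp
  define A where "A t = {j. j < k \<and> c j \<le> t}" for t
  have A_eq: "A t = {..<card (A t)}" for t
  proof (rule downset_eq[of _ k])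
    show "A t \<subseteq> {..<k}" unfolding A_def by auto
    fix a b assume "a \<le> b" "b \<in> A t"
    then show "a \<in> A t" unfolding A_def using c_mono[of a b] by auto
  qed
  define mt where "mt t = card (A t)" for t
  have mt_iff: "j < mt t \<longleftrightarrow> c j \<le> t" if "j < k" for j t
  proof -
    have "j \<in> A t \<longleftrightarrow> c j \<le> t" unfolding A_def using that by simp
    then show ?thesis using A_eq[of t] unfolding mt_def by auto
  qed
  have mt_lt: "mt t < k" if "t < 1" for t
  proof (rule ccontr)
    assume "\<not> mt t < k"
    then have "k \<le> mt t" by simp
    moreover have "k - 1 < k" using k_pos by (intro diff_less) auto
    ultimately have "k - 1 < mt t" by (rule less_le_trans[rotated])
    then have "c (k - 1) \<le> t" using mt_iff[of "k - 1" t] k_pos by simp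
    then show False using c_last that by simp
  qed
  have Gform: "G y t = int x0 + int (P \<sigma> (mt t))" if t: "0 \<le> t" "t < 1" for t
  proof -
    have "G y t = (\<Sum>i<k. int (L!i) * \<lfloor>of_int (e i) - c (inv \<sigma> i) + t\<rfloor>)"
      unfolding G_def y_def ..
    also have "\<dots> = (\<Sum>j<k. int (L!(\<sigma> j)) * \<lfloor>of_int (e (\<sigma> j)) - c j + t\<rfloor>)"
      using sum.permute[OF \<sigma>, of "\<lambda>i. int (L!i) * \<lfloor>of_int (e i) - c (inv \<sigma> i) + t\<rfloor>"]
      by (simp add: comp_def invs)
    also have "\<dots> = (\<Sum>j<k. int (L!(\<sigma> j)) * e (\<sigma> j) - int (L!(\<sigma> j)) + (if c j \<le> t then int (L!(\<sigma> j)) else 0))"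
    proof (rule sum.cong[OF refl])
      fix j assume "j \<in> {..<k}"
      then have fl: "\<lfloor>of_int (e (\<sigma> j)) - c j + t\<rfloor> = e (\<sigma> j) - 1 + (if c j \<le> t then 1 else 0)"
        using c_nn c_le1 t by (intro floor_window2) auto
      then show "int (L!(\<sigma> j)) * \<lfloor>of_int (e (\<sigma> j)) - c j + t\<rfloor> = int (L!(\<sigma> j)) * e (\<sigma> j) - int (L!(\<sigma> j)) + (if c j \<le> t then int (L!(\<sigma> j)) else 0)"
        by (simp only: fl) (cases "c j \<le> t"; simp add: algebra_simps)
    qed
    also have "\<dots> = (\<Sum>j<k. int (L!(\<sigma> j)) * e (\<sigma> j)) - (\<Sum>j<k. int (L!(\<sigma> j))) + (\<Sum>j<k. if c j \<le> t then int (L!(\<sigma> j)) else 0)"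
      by (simp add: sum.distrib sum_subtractf)
    also have "(\<Sum>j<k. int (L!(\<sigma> j)) * e (\<sigma> j)) = (\<Sum>i<k. int (L!i) * e i)"
      using sum.permute[OF \<sigma>, of "\<lambda>i. int (L!i) * e i"] by (simp add: comp_def)
    also have "(\<Sum>j<k. int (L!(\<sigma> j))) = int (P \<sigma> k)" unfolding P_def by simp
    also have "(\<Sum>j<k. if c j \<le> t then int (L!(\<sigma> j)) else 0) = (\<Sum>j\<in>A t. int (L!(\<sigma> j)))"
      unfolding A_def by (subst sum.inter_filter[symmetric]) (auto intro: sum.cong)
    also have "\<dots> = int (P \<sigma> (mt t))" unfolding mt_def P_def by (subst A_eq) simp
    finally show ?thesis using E P_k[OF \<sigma>] by simp
  qed
  have G_neg: "G y t < int x0" if "t < 0" for t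
  proof -
    define t' where "t' = max t (-1/2)"
    have "G y t \<le> G y t'" unfolding t'_def by (intro G_mono) simp
    also have "G y t' = G y (t' + 1) - int n" using G_shift_one[of y t'] by simp
    also have "G y (t' + 1) = int x0 + int (P \<sigma> (mt (t' + 1)))"
      using that unfolding t'_def by (intro Gform) auto
    also have "P \<sigma> (mt (t' + 1)) < n" using that unfolding t'_def by (intro P_lt_n[OF \<sigma>] mt_lt) auto
    finally show ?thesis by simp
  qed
  have G_nn: "int x0 \<le> G y t" if "0 \<le> t" for t
  proof -
    have "G y 0 \<le> G y t" using that by (rule G_mono)
    moreover have "G y 0 = int x0 + int (P \<sigma> (mt 0))" by (rule Gform) auto
    ultimately show ?thesis by simp
  qed
  have G_ge1: "int x0 + int n \<le> G y t" if "1 \<le> t" for t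
  proof -
    have "G y 1 \<le> G y t" using that by (rule G_mono)
    moreover have "G y 1 = G y 0 + int n" using G_shift_one[of y 0] by simp
    moreover have "int x0 \<le> G y 0" by (rule G_nn) simp
    ultimately show ?thesis by simp
  qed
  have alpha_mid: "alpha y w = c m" if m: "m < k" and w1: "int x0 + int (P \<sigma> m) < w"
    and w2: "w \<le> int x0 + int (P \<sigma> (Suc m))" for m w
  proof (rule alpha_unique)
    fix t
    have PS: "P \<sigma> (Suc m) \<le> n" using P_mono[OF \<sigma>, of "Suc m" k] P_k[OF \<sigma>] m by simp
    show "w \<le> G y t \<longleftrightarrow> c m \<le> t"
    proof (cases "t < 0")
      case True
      then show ?thesis using G_neg[OF True] w1 c_nn[of m] by auto
    next
      case False
      show ?thesis
      proof (cases "t < 1")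
        case False
        then show ?thesis using G_ge1[of t] w2 PS c_le1[OF m] by auto
      next
        case True
        have Gt: "G y t = int x0 + int (P \<sigma> (mt t))" using \<open>\<not> t < 0\<close> True by (intro Gform) auto
        have mtk: "mt t \<le> k" using mt_lt[OF True] by simp
        have "w \<le> G y t \<longleftrightarrow> m < mt t"
        proof
          assume "w \<le> G y t"
          then have "P \<sigma> m < P \<sigma> (mt t)" using Gt w1 by simp
          then show "m < mt t" using P_less_imp[OF \<sigma>] m mtk by simp
        next
          assume "m < mt t"
          then have "P \<sigma> (Suc m) \<le> P \<sigma> (mt t)" using P_mono[OF \<sigma>] mtk by simp
          then show "w \<le> G y t" using Gt w2 by simp
        qed
        then show ?thesis using mt_iff[OF m] by simp
      qed
    qed
  qed
  have alpha_x0: "alpha y (int x0) = 0"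
  proof (rule alpha_unique)
    fix t show "int x0 \<le> G y t \<longleftrightarrow> 0 \<le> t" using G_neg G_nn by (meson not_le)
  qed
  have "F0 y v = x v" for v
  proof (cases "v < n")
    case False
    have "x v = 0"
    proof (rule ccontr)
      assume "x v \<noteq> 0"
      then have "v \<in> FS x0 \<sigma>" by (rule supp)
      then have "v < n" unfolding FS_def using n_pos by auto
      then show False using False by simp
    qed
    then show ?thesis using False unfolding F0_def by simp
  next
    case True
    define r where "r = (v + n - x0) mod n"
    have rn: "r < n" unfolding r_def using n_pos by simp
    have hr: "(x0 + r) mod n = v"
    proof -
      have "(x0 + r) mod n = (x0 + (v + n - x0)) mod n" unfolding r_def by (simp add: mod_add_right_eq)
      also have "x0 + (v + n - x0) = v + n" using x0 by simp
      finally show ?thesis using True by simp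
    qed
    define w where "w = int x0 + int r"
    have "nat (w mod int n) = v" unfolding w_def using hr
      by (metis nat_int of_nat_add zmod_int)
    then have F0v: "F0 y v = alpha y (w + 1) - alpha y w" using F0_mod[of y w] by simp
    obtain m where m: "m < k" "P \<sigma> m \<le> r" "r < P \<sigma> (Suc m)"
      using step_exists[of "P \<sigma>" r k] P_zero P_k[OF \<sigma>] rn by auto
    have PSm: "P \<sigma> (Suc m) \<le> n" using P_mono[OF \<sigma>, of "Suc m" k] P_k[OF \<sigma>] m by simp
    show ?thesis
    proof (cases "r = P \<sigma> m")
      case True
      have a1: "alpha y (w + 1) = c m" using m True unfolding w_def by (intro alpha_mid) auto
      have vm: "vv m = v" unfolding vv_def using hr True by simp
      show ?thesis
      proof (cases m)
        case 0
        have "w = int x0" unfolding w_def using True 0 P_zero by simp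
        then have "alpha y w = 0" using alpha_x0 by simp
        then show ?thesis using F0v a1 c_0 vm 0 by simp
      next
        case (Suc m')
        have "P \<sigma> m' < P \<sigma> m" using P_mono_strict[OF \<sigma>, of m' m] Suc m by simp
        then have "alpha y w = c m'" using m True Suc unfolding w_def by (intro alpha_mid) auto
        then show ?thesis using F0v a1 c_Suc[of m'] Suc vm by simp
      qed
    next
      case False
      then have lt: "P \<sigma> m < r" using m by simp
      have "alpha y (w + 1) = c m" using m lt unfolding w_def by (intro alpha_mid) auto
      moreover have "alpha y w = c m" using m lt unfolding w_def by (intro alpha_mid) auto
      ultimately have "F0 y v = 0" using F0v by simp
      moreover have "x v = 0"
      proof (rule ccontr)
        assume "x v \<noteq> 0"
        then have "v \<in> FS x0 \<sigma>" by (rule supp)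
        then obtain m' where m': "m' < k" "v = (x0 + P \<sigma> m') mod n" unfolding FS_def by blast
        have "r = P \<sigma> m'" using mod_small_cancel[of x0 n r "P \<sigma> m'"] x0 rn P_lt_n[OF \<sigma> m'(1)] m'(2) hr by simp
        then have "m < m'" "m' < Suc m" using P_less_imp[OF \<sigma>] lt m m' PSm by auto
        then show False by simp
      qed
      ultimately show ?thesis by simp
    qed
  qed
  then show ?thesis by blast
qed

lemma F0_surj:
  assumes xX: "x \<in> geom_realization (tonnetz L)"
  shows "\<exists>y. F0 y = x"
proof -
  obtain S where xnn: "\<And>i. 0 \<le> x i" and S: "S \<in> tonnetz L" "finite S" "{i. x i \<noteq> 0} \<subseteq> S" "sum x S = 1"
    using xX unfolding geom_realization_def by blast
  obtain F where F: "F \<in> tonn_facets L" "S \<subseteq> F" using S(1) unfolding tonnetz_def by blast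
  obtain x0 \<sigma> where x0: "x0 < n" and \<sigma>: "\<sigma> permutes {..<k}" and Fe: "F = FS x0 \<sigma>"
    using F(1) unfolding tonn_facets_def FS_def P_def by blast
  define vv where "vv m = (x0 + P \<sigma> m) mod n" for m
  have Fimg: "F = vv ` {..<k}" unfolding Fe FS_def vv_def by auto
  have inj: "inj_on vv {..<k}"
  proof (rule inj_onI)
    fix a b assume ab: "a \<in> {..<k}" "b \<in> {..<k}" "vv a = vv b"
    then have "P \<sigma> a = P \<sigma> b"
      using mod_small_cancel[of x0 n "P \<sigma> a" "P \<sigma> b"] x0 P_lt_n[OF \<sigma>] unfolding vv_def by auto
    show "a = b"
    proof (rule ccontr)
      assume "a \<noteq> b"
      then have "a < b \<or> b < a" by arith
      then show False
      proof
        assume "a < b" then have "P \<sigma> a < P \<sigma> b" using ab by (intro P_mono_strict[OF \<sigma>]) auto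
        then show False using \<open>P \<sigma> a = P \<sigma> b\<close> by simp
      next
        assume "b < a" then have "P \<sigma> b < P \<sigma> a" using ab by (intro P_mono_strict[OF \<sigma>]) auto
        then show False using \<open>P \<sigma> a = P \<sigma> b\<close> by simp
      qed
    qed
  qed
  have "(\<Sum>m<k. x (vv m)) = sum x F" unfolding Fimg by (simp add: sum.reindex[OF inj])
  also have "sum x F = sum x S"
    by (rule sum.mono_neutral_right) (use F(2) S(3) Fimg in auto)
  finally have sum1: "(\<Sum>m<k. x ((x0 + P \<sigma> m) mod n)) = 1" using S(4) unfolding vv_def by simp
  have supp: "x v \<noteq> 0 \<Longrightarrow> v \<in> FS x0 \<sigma>" for v using S(3) F(2) Fe by auto
  show ?thesis by (rule surj_facet[OF x0 \<sigma> xnn supp sum1])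
qed

end


type_synonym V = "nat \<Rightarrow>\<^sub>C real"

definition embF :: "nat \<Rightarrow> (nat \<Rightarrow> real) \<Rightarrow> V" where
  "embF N f = Bcontfun (\<lambda>i. if i < N then f i else 0)"

lemma embF_bc: fixes N :: nat and f :: "nat \<Rightarrow> real"
  shows "(\<lambda>i. if i < N then f i else 0) \<in> bcontfun"
proof (rule bcontfun_normI)
  show "continuous_on UNIV (\<lambda>i::nat. if i < N then f i else 0)" by simp
  fix i :: nat
  show "norm (if i < N then f i else 0) \<le> (\<Sum>j<N. \<bar>f j\<bar>)"
  proof (cases "i < N")
    case True
    then have "\<bar>f i\<bar> \<le> (\<Sum>j<N. \<bar>f j\<bar>)" by (intro member_le_sum) auto
    then show ?thesis using True by simp
  next
    case False then show ?thesis by (simp add: sum_nonneg)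
  qed
qed

lemma embF_apply [simp]: "apply_bcontfun (embF N f) i = (if i < N then f i else 0)"
  unfolding embF_def using embF_bc[of N f] by (simp add: Bcontfun_inverse)

lemma apply_le_norm: "\<bar>apply_bcontfun y i - apply_bcontfun y' i\<bar> \<le> norm (y - y')"
  using norm_bounded[of "y - y'" i] by simp

lemma apply_abs_le_norm: "\<bar>apply_bcontfun y i\<bar> \<le> norm y"
  using norm_bounded[of y i] by simp

lemma continuous_apply: "continuous_on UNIV (\<lambda>y::V. apply_bcontfun y i)"
proof (rule continuous_on_iff[THEN iffD2], intro ballI allI impI)
  fix x :: V and e :: real assume "0 < e"
  then show "\<exists>d>0. \<forall>x'\<in>UNIV. dist x' x < d \<longrightarrow> dist (apply_bcontfun x' i) (apply_bcontfun x i) < e"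
    using apply_le_norm by (intro exI[of _ e]) (auto simp: dist_norm intro: le_less_trans)
qed

lemma continuous_R: "continuous_on UNIV (apply_bcontfun :: V \<Rightarrow> nat \<Rightarrow> real)"
  by (rule continuous_on_coordinatewise_then_product) (rule continuous_apply)

lemma embF_lip: "norm (embF N f - embF N g) \<le> (\<Sum>i<N. \<bar>f i - g i\<bar>)"
proof (rule norm_bound)
  fix i
  show "norm (apply_bcontfun (embF N f - embF N g) i) \<le> (\<Sum>i<N. \<bar>f i - g i\<bar>)"
  proof (cases "i < N")
    case True
    then have "\<bar>f i - g i\<bar> \<le> (\<Sum>i<N. \<bar>f i - g i\<bar>)" by (intro member_le_sum) auto
    then show ?thesis using True by simp
  next
    case False then show ?thesis by (simp add: sum_nonneg)
  qed
qed

lemma continuous_embF: "continuous_on UNIV (embF N)"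
proof -
  have "isCont (embF N) g" for g
  proof -
    have "continuous_on UNIV (\<lambda>f::nat\<Rightarrow>real. \<Sum>i<N. \<bar>f i - g i\<bar>)"
      by (intro continuous_intros continuous_on_product_coordinates)
    then have "isCont (\<lambda>f::nat\<Rightarrow>real. \<Sum>i<N. \<bar>f i - g i\<bar>) g" by (simp add: continuous_on_eq_continuous_at)
    then have lim: "((\<lambda>f::nat\<Rightarrow>real. \<Sum>i<N. \<bar>f i - g i\<bar>) \<longlongrightarrow> 0) (at g)"
      using isCont_def by force
    have "((embF N) \<longlongrightarrow> embF N g) (at g)"
    proof (rule tendstoI)
      fix e :: real assume e: "0 < e"
      have ev: "eventually (\<lambda>f. dist (\<Sum>i<N. \<bar>f i - g i\<bar>) 0 < e) (at g)"
        using tendstoD[OF lim e] .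
      show "eventually (\<lambda>f. dist (embF N f) (embF N g) < e) (at g)"
      proof (rule eventually_mono[OF ev])
        fix f assume "dist (\<Sum>i<N. \<bar>f i - g i\<bar>) 0 < e"
        then have "(\<Sum>i<N. \<bar>f i - g i\<bar>) < e" by simp
        then show "dist (embF N f) (embF N g) < e" using embF_lip[of N f g] by (simp add: dist_norm)
      qed
    qed
    then show ?thesis by (simp add: isCont_def)
  qed
  then show ?thesis by (simp add: continuous_on_eq_continuous_at)
qed


lemma mult_div_pos: "(c::real) > 0 \<Longrightarrow> c * (a / c) = a" by simp

lemma int_small:
  fixes l :: V
  assumes "\<And>i. apply_bcontfun l i \<in> \<int>" "norm l < 1"
  shows "l = 0"
proof (rule bcontfun_eqI)
  fix i
  have "\<bar>apply_bcontfun l i\<bar> < 1" using apply_abs_le_norm[of l i] assms(2) by linarith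
  moreover obtain m where "apply_bcontfun l i = of_int m" using assms(1)[of i] unfolding Ints_def by blast
  ultimately show "apply_bcontfun l i = apply_bcontfun 0 i" by simp
qed

context tonn_gr begin

abbreviation "XX \<equiv> geom_realization (tonnetz L)"

definition XV :: "V set" where "XV = embF n ` XX"

definition D :: "V set" where "D = {y. \<forall>i. k - 1 \<le> i \<longrightarrow> apply_bcontfun y i = 0}"

definition FV :: "V \<Rightarrow> V" where "FV y = embF n (F0 (apply_bcontfun y))"

definition Deck :: "V set" where
  "Deck = {l \<in> D. (\<forall>i. apply_bcontfun l i \<in> \<int>) \<and> int n dvd (\<Sum>i<k. int (L!i) * \<lfloor>apply_bcontfun l i\<rfloor>)}"

lemma F0_zero_ge: "n \<le> v \<Longrightarrow> F0 y v = 0" unfolding F0_def by simp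

lemma XX_zero: assumes "x \<in> XX" "n \<le> i" shows "x i = 0"
proof (rule ccontr)
  assume nz: "x i \<noteq> 0"
  obtain S where S: "S \<in> tonnetz L" "{i. x i \<noteq> 0} \<subseteq> S" using assms(1) unfolding geom_realization_def by blast
  obtain F where F: "F \<in> tonn_facets L" "S \<subseteq> F" using S(1) unfolding tonnetz_def by blast
  obtain x0 \<sigma> where Fe: "F = FS x0 \<sigma>" using F(1) unfolding tonn_facets_def FS_def P_def by blast
  have "i \<in> F" using nz S(2) F(2) by auto
  then have "i < n" unfolding Fe FS_def using n_pos by auto
  then show False using assms(2) by simp
qed

lemma R_E: "x \<in> XX \<Longrightarrow> apply_bcontfun (embF n x) = x"
  using XX_zero by (intro ext) auto

lemma R_EF: "apply_bcontfun (embF n (F0 u)) = F0 u"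
  using F0_zero_ge by (intro ext) auto

lemma F0_cong: "(\<And>i. i < k \<Longrightarrow> u i = u' i) \<Longrightarrow> F0 u = F0 u'"
  using alpha_cong unfolding F0_def by (intro ext) metis

lemma F0_add_const: "F0 (\<lambda>i. u i + s) = F0 u"
  unfolding F0_def alpha_add_const by (intro ext) simp

lemma F0_add_int: assumes "(\<Sum>i<k. int (L!i) * d i) = j * int n"
  shows "F0 (\<lambda>i. u i + of_int (d i)) = F0 u"
proof
  fix v
  have "alpha u (w - j * int n) = alpha u w - of_int j" for w
    using alpha_period[of u "w - j * int n" j] by simp
  then show "F0 (\<lambda>i. u i + of_int (d i)) v = F0 u v"
    unfolding F0_def alpha_add_int assms by simp
qed

lemma FV_in: "FV y \<in> XV" unfolding FV_def XV_def using F0_in_X by blast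

lemma FV_lip: "norm (FV y - FV y') \<le> real n * (2 * norm (y - y'))"
proof -
  have "norm (FV y - FV y') \<le> (\<Sum>v<n. \<bar>F0 (apply_bcontfun y) v - F0 (apply_bcontfun y') v\<bar>)"
    unfolding FV_def by (rule embF_lip)
  also have "\<dots> \<le> (\<Sum>v<n. 2 * norm (y - y'))"
  proof (rule sum_mono)
    fix v assume "v \<in> {..<n}"
    have a: "\<bar>alpha (apply_bcontfun y) w - alpha (apply_bcontfun y') w\<bar> \<le> norm (y - y')" for w
      by (rule alpha_lip) (rule apply_le_norm)
    show "\<bar>F0 (apply_bcontfun y) v - F0 (apply_bcontfun y') v\<bar> \<le> 2 * norm (y - y')"
      unfolding F0_def using a[of "int v"] a[of "int v + 1"] by (auto simp: abs_le_iff)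
  qed
  finally show ?thesis by simp
qed

lemma FV_cont: "continuous_on S FV"
proof -
  have "continuous_on UNIV FV"
  proof (rule continuous_on_iff[THEN iffD2], intro ballI allI impI)
    fix x :: V and e :: real assume e: "0 < e"
    define d where "d = e / (2 * real n + 1)"
    have d: "d > 0" unfolding d_def using e by simp
    show "\<exists>d>0. \<forall>x'\<in>UNIV. dist x' x < d \<longrightarrow> dist (FV x') (FV x) < e"
    proof (intro exI[of _ d] conjI ballI impI d)
      fix x' assume "dist x' x < d"
      then have nd: "norm (x' - x) < d" by (simp add: dist_norm)
      have "norm (FV x' - FV x) \<le> real n * (2 * norm (x' - x))" by (rule FV_lip)
      also have "\<dots> \<le> (2 * real n + 1) * norm (x' - x)" by (simp add: algebra_simps)
      also have "\<dots> < (2 * real n + 1) * d" using nd by (intro mult_strict_left_mono) auto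
      also have "\<dots> = e" unfolding d_def by simp
      finally show "dist (FV x') (FV x) < e" by (simp add: dist_norm)
    qed
  qed
  then show ?thesis by (rule continuous_on_subset) simp
qed

lemma D_add: "a \<in> D \<Longrightarrow> b \<in> D \<Longrightarrow> a + b \<in> D" unfolding D_def by simp
lemma D_diff: "a \<in> D \<Longrightarrow> b \<in> D \<Longrightarrow> a - b \<in> D" unfolding D_def by simp
lemma D_scale: "a \<in> D \<Longrightarrow> c *\<^sub>R a \<in> D" unfolding D_def by simp
lemma D_zero: "0 \<in> D" unfolding D_def by simp

lemma D_closed: "closed D"
proof -
  have "closed {y::V. k - 1 \<le> i \<longrightarrow> apply_bcontfun y i = 0}" for i
  proof (cases "k - 1 \<le> i")
    case True
    have "closed {y::V. apply_bcontfun y i = 0}"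
      by (rule closed_Collect_eq) (auto intro: continuous_apply)
    then show ?thesis using True by simp
  next
    case False then show ?thesis by simp
  qed
  then show ?thesis unfolding D_def by (intro closed_Collect_all) auto
qed

lemma Deck_D: "l \<in> Deck \<Longrightarrow> l \<in> D" unfolding Deck_def by simp

lemma Deck_int: "l \<in> Deck \<Longrightarrow> apply_bcontfun l i \<in> \<int>" unfolding Deck_def by simp

lemma floor_Ints: "x \<in> \<int> \<Longrightarrow> of_int \<lfloor>x\<rfloor> = x"
  by (metis Ints_cases floor_of_int)

lemma Deck_zero: "0 \<in> Deck" unfolding Deck_def using D_zero by simp

lemma Deck_add: assumes "l \<in> Deck" "m \<in> Deck" shows "l + m \<in> Deck"
proof -
  have fl: "\<lfloor>apply_bcontfun (l + m) i\<rfloor> = \<lfloor>apply_bcontfun l i\<rfloor> + \<lfloor>apply_bcontfun m i\<rfloor>" for i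
    using floor_Ints[OF Deck_int[OF assms(1), of i]] floor_Ints[OF Deck_int[OF assms(2), of i]]
    by (metis floor_of_int of_int_add plus_bcontfun.rep_eq)
  have "(\<Sum>i<k. int (L!i) * \<lfloor>apply_bcontfun (l + m) i\<rfloor>) =
      (\<Sum>i<k. int (L!i) * \<lfloor>apply_bcontfun l i\<rfloor>) + (\<Sum>i<k. int (L!i) * \<lfloor>apply_bcontfun m i\<rfloor>)"
    unfolding fl by (simp add: distrib_left sum.distrib)
  moreover have "int n dvd (\<Sum>i<k. int (L!i) * \<lfloor>apply_bcontfun l i\<rfloor>)"
    "int n dvd (\<Sum>i<k. int (L!i) * \<lfloor>apply_bcontfun m i\<rfloor>)" using assms unfolding Deck_def by auto
  ultimately have "int n dvd (\<Sum>i<k. int (L!i) * \<lfloor>apply_bcontfun (l + m) i\<rfloor>)" by simp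
  moreover have "l + m \<in> D" using D_add Deck_D assms by blast
  moreover have "\<forall>i. apply_bcontfun (l + m) i \<in> \<int>" using Deck_int assms by simp
  ultimately show ?thesis unfolding Deck_def by blast
qed

lemma FV_deck: assumes "l \<in> Deck" shows "FV (y + l) = FV y"
proof -
  define d where "d i = \<lfloor>apply_bcontfun l i\<rfloor>" for i
  obtain j where j: "(\<Sum>i<k. int (L!i) * d i) = int n * j" using assms unfolding Deck_def d_def by (auto elim: dvdE)
  have "apply_bcontfun (y + l) = (\<lambda>i. apply_bcontfun y i + of_int (d i))"
    unfolding d_def by (intro ext) (simp add: floor_Ints[OF Deck_int[OF assms]])
  then have "F0 (apply_bcontfun (y + l)) = F0 (apply_bcontfun y)"
    using F0_add_int[of d j "apply_bcontfun y"] j by (simp add: mult.commute)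
  then show ?thesis unfolding FV_def by simp
qed

lemma FV_eq_F0: "FV y = FV z \<Longrightarrow> F0 (apply_bcontfun y) = F0 (apply_bcontfun z)"
  unfolding FV_def by (metis R_EF)


lemma FV_surj: "FV ` D = XV"
proof
  show "FV ` D \<subseteq> XV" using FV_in by blast
  show "XV \<subseteq> FV ` D"
  proof
    fix x' assume "x' \<in> XV"
    then obtain x where x: "x \<in> XX" "x' = embF n x" unfolding XV_def by blast
    obtain y where y: "F0 y = x" using F0_surj[OF x(1)] by blast
    define yD where "yD = embF (k - 1) (\<lambda>i. y i - y (k - 1))"
    have "yD \<in> D" unfolding yD_def D_def by simp
    moreover have "F0 (apply_bcontfun yD) = F0 (\<lambda>i. y i + (- y (k - 1)))"
    proof (rule F0_cong)
      fix i assume "i < k"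
      show "apply_bcontfun yD i = y i + - y (k - 1)"
      proof (cases "i < k - 1")
        case True then show ?thesis unfolding yD_def by simp
      next
        case False
        then have "i = k - 1" using \<open>i < k\<close> by linarith
        then show ?thesis unfolding yD_def by simp
      qed
    qed
    then have "FV yD = x'" unfolding FV_def F0_add_const y x(2) by simp
    ultimately show "x' \<in> FV ` D" by blast
  qed
qed

lemma K2D:
  assumes y: "y \<in> D" and z: "z \<in> D" and eq: "FV y = FV z"
  shows "z - y \<in> Deck"
proof -
  obtain s d where sd: "\<forall>i<k. apply_bcontfun z i = apply_bcontfun y i + s + of_int (d i)"
    and sum0: "(\<Sum>i<k. int (L!i) * d i) = 0"
    using F0_inj[OF FV_eq_F0[OF eq]] by blast
  have k1: "k - 1 < k" using k_pos by simp
  have "apply_bcontfun z (k - 1) = 0" "apply_bcontfun y (k - 1) = 0" using y z unfolding D_def by auto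
  then have s: "s = - of_int (d (k - 1))" using sd k1 by auto
  have val: "apply_bcontfun (z - y) i = of_int (d i - d (k - 1))" if "i < k" for i
    using sd that s by simp
  have zyD: "z - y \<in> D" using D_diff y z by blast
  have ints: "apply_bcontfun (z - y) i \<in> \<int>" for i
  proof (cases "i < k")
    case True then show ?thesis using val by simp
  next
    case False then have "apply_bcontfun (z - y) i = 0" using zyD unfolding D_def by simp
    then show ?thesis by simp
  qed
  have "(\<Sum>i<k. int (L!i) * \<lfloor>apply_bcontfun (z - y) i\<rfloor>) = (\<Sum>i<k. int (L!i) * d i - int (L!i) * d (k - 1))"
    using val by (intro sum.cong) (auto simp: right_diff_distrib)
  also have "\<dots> = - (int n * d (k - 1))"
    using sum0 by (simp add: sum_subtractf sum_distrib_right[symmetric] n_eq_int)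
  finally have "int n dvd (\<Sum>i<k. int (L!i) * \<lfloor>apply_bcontfun (z - y) i\<rfloor>)" by simp
  then show ?thesis unfolding Deck_def using zyD ints by blast
qed

lemma Deck_small: "l \<in> Deck \<Longrightarrow> m \<in> Deck \<Longrightarrow> norm (l - m) < 1 \<Longrightarrow> l = m"
  using int_small[of "l - m"] Deck_int
  by (metis (no_types, lifting) Ints_diff eq_iff_diff_eq_0 minus_bcontfun.rep_eq)

definition B0 :: "(nat \<Rightarrow> real) set" where
  "B0 = Pi\<^sub>E UNIV (\<lambda>i. if i < k - 1 then {0..real n} else {0})"

definition Box :: "V set" where "Box = embF (k - 1) ` B0"

lemma compact_Box: "compact Box"
proof -
  have "compactin (product_topology (\<lambda>i. euclidean) UNIV) B0"
    unfolding B0_def compactin_PiE by auto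
  then have "compact B0" by (simp add: euclidean_product_topology)
  moreover have "continuous_on B0 (embF (k - 1))" by (rule continuous_on_subset[OF continuous_embF]) simp
  ultimately show ?thesis unfolding Box_def using compact_continuous_image by blast
qed

lemma Box_reduce:
  assumes "z \<in> D"
  shows "\<exists>l\<in>Deck. z - l \<in> Box"
proof -
  have np: "real n > 0" using n_pos by simp
  define fl where "fl i = int n * \<lfloor>apply_bcontfun z i / real n\<rfloor>" for i
  define l where "l = embF (k - 1) (\<lambda>i. of_int (fl i))"
  have lD: "l \<in> D" unfolding l_def D_def by simp
  have lint: "apply_bcontfun l i \<in> \<int>" for i unfolding l_def by simp
  have flr: "\<lfloor>apply_bcontfun l i\<rfloor> = (if i < k - 1 then fl i else 0)" for i
    unfolding l_def by simp
  have "int n dvd (\<Sum>i<k. int (L!i) * \<lfloor>apply_bcontfun l i\<rfloor>)"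
    unfolding flr by (intro dvd_sum) (auto simp: fl_def)
  then have lDeck: "l \<in> Deck" unfolding Deck_def using lD lint by blast
  define g where "g = apply_bcontfun (z - l)"
  have zlD: "z - l \<in> D" using D_diff assms lD by blast
  have "g \<in> B0"
  proof -
    have "g i \<in> (if i < k - 1 then {0..real n} else {0})" for i
    proof (cases "i < k - 1")
      case True
      define a where "a = apply_bcontfun z i"
      have f1: "of_int \<lfloor>a / real n\<rfloor> \<le> a / real n" and f2: "a / real n < of_int \<lfloor>a / real n\<rfloor> + 1" by linarith+
      have "real n * of_int \<lfloor>a / real n\<rfloor> \<le> real n * (a / real n)"
        using mult_left_mono[OF f1, of "real n"] by simp
      moreover have "real n * (a / real n) < real n * (of_int \<lfloor>a / real n\<rfloor> + 1)"
        using mult_strict_left_mono[OF f2 np] .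
      moreover have "real n * (a / real n) = a" using np by (rule mult_div_pos)
      ultimately have "real n * of_int \<lfloor>a / real n\<rfloor> \<le> a" "a < real n * of_int \<lfloor>a / real n\<rfloor> + real n"
        using np by (simp_all add: distrib_left)
      then show ?thesis using True unfolding g_def l_def fl_def a_def by auto
    next
      case False
      then have "g i = 0" using zlD unfolding g_def D_def by simp
      then show ?thesis using False by simp
    qed
    then show ?thesis unfolding B0_def by (simp add: PiE_UNIV_domain)
  qed
  moreover have "embF (k - 1) g = z - l"
    using zlD unfolding g_def D_def by (intro bcontfun_eqI) auto
  ultimately have "z - l \<in> Box" unfolding Box_def by (metis image_eqI)
  then show ?thesis using lDeck by blast
qed

lemma open_map:
  assumes U: "openin (top_of_set D) U"
  shows "openin (top_of_set XV) (FV ` U)"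
proof -
  obtain Oset where hO: "open Oset" "U = D \<inter> Oset" using U unfolding openin_open by blast
  define Ob where "Ob = (\<Union>l\<in>Deck. (\<lambda>x. l + x) ` Oset)"
  have oOb: "open Ob" unfolding Ob_def using hO(1) by (intro open_UN ballI open_translation) auto
  define U' where "U' = D \<inter> Ob"
  have c1: "FV ` U = FV ` U'"
  proof
    show "FV ` U \<subseteq> FV ` U'"
    proof
      fix x assume "x \<in> FV ` U"
      then obtain u where u: "u \<in> D" "u \<in> Oset" "x = FV u" using hO(2) by blast
      have "u \<in> (\<lambda>x. 0 + x) ` Oset" using u by simp
      then have "u \<in> Ob" unfolding Ob_def using Deck_zero by blast
      then show "x \<in> FV ` U'" unfolding U'_def using u by blast
    qed
    show "FV ` U' \<subseteq> FV ` U"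
    proof
      fix x assume "x \<in> FV ` U'"
      then obtain z l w0 where z: "z \<in> D" "l \<in> Deck" "w0 \<in> Oset" "z = l + w0" "x = FV z"
        unfolding U'_def Ob_def by blast
      have "w0 = z - l" using z by simp
      then have "w0 \<in> D" using D_diff z Deck_D by blast
      then have "w0 \<in> U" using hO(2) z by blast
      moreover have "FV z = FV w0" using FV_deck[OF z(2), of w0] z(4) by (simp add: add.commute)
      ultimately show "x \<in> FV ` U" using z by blast
    qed
  qed
  have c2: "XV - FV ` U' = FV ` (D - U')"
  proof
    show "XV - FV ` U' \<subseteq> FV ` (D - U')"
    proof
      fix x assume x: "x \<in> XV - FV ` U'"
      then have "x \<in> FV ` D" using FV_surj by simp
      then obtain z where "z \<in> D" "x = FV z" by blast
      then show "x \<in> FV ` (D - U')" using x by blast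
    qed
    show "FV ` (D - U') \<subseteq> XV - FV ` U'"
    proof
      fix x assume "x \<in> FV ` (D - U')"
      then obtain z where z: "z \<in> D" "z \<notin> U'" "x = FV z" by blast
      have "x \<notin> FV ` U'"
      proof
        assume "x \<in> FV ` U'"
        then obtain u l w0 where u: "u \<in> D" "l \<in> Deck" "w0 \<in> Oset" "u = l + w0" "FV u = FV z"
          using z(3) unfolding U'_def Ob_def by blast
        have d: "z - u \<in> Deck" using K2D[OF u(1) z(1) u(5)] .
        have "z = (l + (z - u)) + w0" using u(4) by simp
        moreover have "l + (z - u) \<in> Deck" using Deck_add[OF u(2) d] .
        ultimately have "z \<in> Ob" unfolding Ob_def using u(3) by blast
        then show False using z unfolding U'_def by blast
      qed
      then show "x \<in> XV - FV ` U'" using z FV_in by blast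
    qed
  qed
  have c3: "FV ` (D - U') = FV ` ((D - U') \<inter> Box)"
  proof
    show "FV ` ((D - U') \<inter> Box) \<subseteq> FV ` (D - U')" by blast
    show "FV ` (D - U') \<subseteq> FV ` ((D - U') \<inter> Box)"
    proof
      fix x assume "x \<in> FV ` (D - U')"
      then obtain z where z: "z \<in> D" "z \<notin> U'" "x = FV z" by blast
      obtain l where l: "l \<in> Deck" "z - l \<in> Box" using Box_reduce[OF z(1)] by blast
      have zl: "z - l \<in> D" using D_diff z(1) Deck_D[OF l(1)] by blast
      have "z - l \<notin> U'"
      proof
        assume "z - l \<in> U'"
        then obtain m w0 where m: "m \<in> Deck" "w0 \<in> Oset" "z - l = m + w0" unfolding U'_def Ob_def by blast
        have "z = (m + l) + w0" using m(3) by (simp add: algebra_simps)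
        then have "z \<in> Ob" unfolding Ob_def using Deck_add[OF m(1) l(1)] m(2) by blast
        then show False using z unfolding U'_def by blast
      qed
      moreover have "FV (z - l) = FV z" using FV_deck[OF l(1), of "z - l"] by simp
      ultimately have "z - l \<in> (D - U') \<inter> Box" "x = FV (z - l)" using z l zl by auto
      then show "x \<in> FV ` ((D - U') \<inter> Box)" by (rule rev_image_eqI)
    qed
  qed
  have "closed (D - U')"
  proof -
    have "D - U' = D \<inter> - Ob" unfolding U'_def by blast
    then show ?thesis using D_closed oOb by (simp add: closed_Int open_closed)
  qed
  then have "compact ((D - U') \<inter> Box)" using compact_Box by (rule closed_Int_compact)
  then have "compact (FV ` ((D - U') \<inter> Box))" by (rule compact_continuous_image[OF FV_cont])
  then have "closed (FV ` ((D - U') \<inter> Box))" by (rule compact_imp_closed)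
  moreover have "FV ` ((D - U') \<inter> Box) \<subseteq> XV" using FV_in by blast
  ultimately have cl: "closedin (top_of_set XV) (FV ` ((D - U') \<inter> Box))" by (simp add: closed_subset)
  have "FV ` U' \<subseteq> XV" using FV_in by blast
  then have "FV ` U' = XV - (XV - FV ` U')" by blast
  then have "FV ` U = XV - FV ` ((D - U') \<inter> Box)" unfolding c1 c2 c3 .
  then show ?thesis using cl by (simp add: openin_diff)
qed

end



context tonn_gr begin

lemma covering: "covering_space D FV XV"
proof (rule covering_spaceI)
  show "continuous_on D FV" by (rule FV_cont)
  show "FV ` D = XV" by (rule FV_surj)
  fix x assume "x \<in> XV"
  then have "x \<in> FV ` D" using FV_surj by simp
  then obtain y where y: "y \<in> D" "FV y = x" by blast
  define W where "W c = D \<inter> ball c (1/2)" for c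
  define T where "T = FV ` W y"
  have oW: "openin (top_of_set D) (W c)" for c unfolding W_def by (rule openin_open_Int) simp
  have "y \<in> W y" unfolding W_def using y by simp
  then have xT: "x \<in> T" unfolding T_def using y by blast
  have oT: "openin (top_of_set XV) T" unfolding T_def by (rule open_map[OF oW])
  have TXV: "T \<subseteq> XV" unfolding T_def using FV_in by blast
  define VV where "VV = (\<lambda>l. W (y + l)) ` Deck"
  have shiftW: "z - l \<in> W y" if "z \<in> W (y + l)" "l \<in> Deck" for z l
  proof -
    have "z - l \<in> D" using that D_diff Deck_D unfolding W_def by blast
    moreover have "dist (z - l) y = dist z (y + l)" by (simp add: dist_norm algebra_simps)
    ultimately show ?thesis using that unfolding W_def by (simp add: dist_commute)
  qed
  have FVimg: "FV ` W (y + l) = T" if l: "l \<in> Deck" for l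
  proof
    show "FV ` W (y + l) \<subseteq> T"
    proof
      fix v assume "v \<in> FV ` W (y + l)"
      then obtain z where z: "z \<in> W (y + l)" "v = FV z" by blast
      have "FV z = FV (z - l)" using FV_deck[OF l, of "z - l"] by simp
      then show "v \<in> T" unfolding T_def using shiftW[OF z(1) l] z(2) by blast
    qed
    show "T \<subseteq> FV ` W (y + l)"
    proof
      fix v assume "v \<in> T"
      then obtain w where w: "w \<in> W y" "v = FV w" unfolding T_def by blast
      have "w + l \<in> D" using w D_add Deck_D[OF l] unfolding W_def by blast
      moreover have "dist (w + l) (y + l) = dist w y" by (simp add: dist_norm algebra_simps)
      ultimately have "w + l \<in> W (y + l)" using w unfolding W_def by (simp add: dist_commute)
      moreover have "FV (w + l) = FV w" using FV_deck[OF l] .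
      ultimately show "v \<in> FV ` W (y + l)" using w by (metis image_eqI)
    qed
  qed
  have small: "norm (a - b) < 1" if "a \<in> W c" "b \<in> W c" for a b c
  proof -
    have "dist a c < 1/2" "dist b c < 1/2" using that unfolding W_def by (auto simp: dist_commute)
    then have "dist a b < 1" using dist_triangle_less_add[of a c "1/2" b "1/2"] by (simp add: dist_commute)
    then show ?thesis by (simp add: dist_norm)
  qed
  show "\<exists>T. x \<in> T \<and> openin (top_of_set XV) T \<and>
          (\<exists>v. \<Union>v = D \<inter> FV -` T \<and> (\<forall>u\<in>v. openin (top_of_set D) u) \<and>
               pairwise disjnt v \<and> (\<forall>u\<in>v. \<exists>q. homeomorphism u T FV q))"
  proof (intro exI conjI)
    show "x \<in> T" by (rule xT)
    show "openin (top_of_set XV) T" by (rule oT)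
    show "\<Union>VV = D \<inter> FV -` T"
    proof
      show "\<Union>VV \<subseteq> D \<inter> FV -` T"
      proof
        fix z assume "z \<in> \<Union>VV"
        then obtain l where l: "l \<in> Deck" "z \<in> W (y + l)" unfolding VV_def by blast
        have "z \<in> D" using l unfolding W_def by blast
        moreover have "FV z \<in> T" using FVimg[OF l(1)] l(2) by blast
        ultimately show "z \<in> D \<inter> FV -` T" by blast
      qed
      show "D \<inter> FV -` T \<subseteq> \<Union>VV"
      proof
        fix z assume z: "z \<in> D \<inter> FV -` T"
        then obtain w where w: "w \<in> W y" "FV z = FV w" unfolding T_def by auto
        have wD: "w \<in> D" using w unfolding W_def by blast
        have l: "z - w \<in> Deck" using K2D[OF wD _ w(2)[symmetric]] z by blast
        have "dist z (y + (z - w)) = dist w y" by (simp add: dist_norm algebra_simps norm_minus_commute)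
        then have "z \<in> W (y + (z - w))" using z w unfolding W_def by (simp add: dist_commute)
        then show "z \<in> \<Union>VV" unfolding VV_def using l by blast
      qed
    qed
    show "\<forall>u\<in>VV. openin (top_of_set D) u" unfolding VV_def using oW by blast
    show "pairwise disjnt VV"
    proof (rule pairwiseI)
      fix a b assume ab: "a \<in> VV" "b \<in> VV" "a \<noteq> b"
      then obtain l m where lm: "l \<in> Deck" "m \<in> Deck" "a = W (y + l)" "b = W (y + m)" unfolding VV_def by blast
      show "disjnt a b"
      proof (rule ccontr)
        assume "\<not> disjnt a b"
        then obtain z where z: "z \<in> W (y + l)" "z \<in> W (y + m)" using lm unfolding disjnt_def by blast
        have "dist z (y + l) < 1/2" "dist z (y + m) < 1/2" using z unfolding W_def by (auto simp: dist_commute)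
        then have "dist (y + l) (y + m) < 1" using dist_triangle_less_add[of "y + l" z "1/2" "y + m" "1/2"] by (simp add: dist_commute)
        then have "norm (l - m) < 1" by (simp add: dist_norm)
        then have "l = m" using Deck_small lm by blast
        then show False using ab lm by simp
      qed
    qed
    show "\<forall>u\<in>VV. \<exists>q. homeomorphism u T FV q"
    proof
      fix u assume "u \<in> VV"
      then obtain l where l: "l \<in> Deck" "u = W (y + l)" unfolding VV_def by blast
      have inj: "inj_on FV u"
      proof (rule inj_onI)
        fix z z' assume zz: "z \<in> u" "z' \<in> u" "FV z = FV z'"
        have "z \<in> D" "z' \<in> D" using zz l unfolding W_def by auto
        then have d: "z' - z \<in> Deck" using K2D zz(3) by blast
        have "norm (z' - z) < 1" using small[of z' "y + l" z] zz l by simp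
        then have "z' - z = 0" using Deck_small[OF d Deck_zero] by simp
        then show "z = z'" by simp
      qed
      obtain g where "homeomorphism u T FV g"
      proof (rule homeomorphism_injective_open_map)
        show "continuous_on u FV" by (rule FV_cont)
        show "FV ` u = T" using FVimg[OF l(1)] l(2) by simp
        show "inj_on FV u" by (rule inj)
        fix U0 assume U0: "openin (top_of_set u) U0"
        have "openin (top_of_set D) U0" using openin_trans[OF U0] oW l(2) by blast
        then have "openin (top_of_set XV) (FV ` U0)" by (rule open_map)
        moreover have "FV ` U0 \<subseteq> T" using openin_subset[OF U0] FVimg[OF l(1)] l(2) by auto
        ultimately show "openin (top_of_set T) (FV ` U0)" using openin_subset_trans TXV by blast
      qed
      then show "\<exists>q. homeomorphism u T FV q" by blast
    qed
  qed
qed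

end


context tonn_gr begin

lemma D_convex: "convex D"
  unfolding convex_def using D_add D_scale by blast

lemma main_abelian:
  assumes aX: "a \<in> XX"
  shows "pi1_abelian XX a"
  unfolding pi1_abelian_def
proof (intro allI impI, elim conjE)
  fix p q :: "real \<Rightarrow> nat \<Rightarrow> real"
  assume p: "path p" "path_image p \<subseteq> XX" "pathstart p = a" "pathfinish p = a"
     and q: "path q" "path_image q \<subseteq> XX" "pathstart q = a" "pathfinish q = a"
  define E where "E = embF n"
  have Ec: "continuous_on S E" for S unfolding E_def by (rule continuous_on_subset[OF continuous_embF]) simp
  define p' where "p' = E \<circ> p"
  define q' where "q' = E \<circ> q"
  have pp: "path p'" unfolding p'_def by (rule path_continuous_image[OF p(1) Ec])
  have qp: "path q'" unfolding q'_def by (rule path_continuous_image[OF q(1) Ec])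
  have EX: "E x \<in> XV" if "x \<in> XX" for x unfolding E_def XV_def using that by blast
  have pim: "path_image p' \<subseteq> XV" unfolding p'_def path_image_compose using p(2) EX by blast
  have qim: "path_image q' \<subseteq> XV" unfolding q'_def path_image_compose using q(2) EX by blast
  have "E a \<in> FV ` D" using EX[OF aX] FV_surj by simp
  then obtain y0 where y0': "y0 \<in> D" "E a = FV y0" by (rule imageE)
  then have y0: "y0 \<in> D" "FV y0 = E a" by simp_all
  have ps: "pathstart p' = FV y0" unfolding p'_def pathstart_compose p(3) y0(2) ..
  have qs: "pathstart q' = FV y0" unfolding q'_def pathstart_compose q(3) y0(2) ..
  obtain hp where hp: "path hp" "path_image hp \<subseteq> D" "pathstart hp = y0" "\<And>t. t \<in> {0..1} \<Longrightarrow> FV (hp t) = p' t"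
    using covering_space_lift_path_strong[OF covering y0(1) pp pim ps] by blast
  obtain hq where hq: "path hq" "path_image hq \<subseteq> D" "pathstart hq = y0" "\<And>t. t \<in> {0..1} \<Longrightarrow> FV (hq t) = q' t"
    using covering_space_lift_path_strong[OF covering y0(1) qp qim qs] by blast
  have hp1: "hp 1 \<in> D" using hp(2) pathfinish_in_path_image[of hp] unfolding pathfinish_def by blast
  have hq1: "hq 1 \<in> D" using hq(2) pathfinish_in_path_image[of hq] unfolding pathfinish_def by blast
  have "FV (hp 1) = p' 1" using hp(4)[of 1] by simp
  also have "p' 1 = E a" unfolding p'_def using p(4) by (simp add: pathfinish_def)
  finally have "FV y0 = FV (hp 1)" using y0 by simp
  then have lam: "hp 1 - y0 \<in> Deck" using K2D[OF y0(1) hp1] by blast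
  have "FV (hq 1) = q' 1" using hq(4)[of 1] by simp
  also have "q' 1 = E a" unfolding q'_def using q(4) by (simp add: pathfinish_def)
  finally have "FV y0 = FV (hq 1)" using y0 by simp
  then have mu: "hq 1 - y0 \<in> Deck" using K2D[OF y0(1) hq1] by blast
  define lm where "lm = hp 1 - y0"
  define mm where "mm = hq 1 - y0"
  define hq2 where "hq2 = (\<lambda>t. hq t + lm)"
  define hp2 where "hp2 = (\<lambda>t. hp t + mm)"
  have phq2: "path hq2" using hq(1) unfolding hq2_def path_def by (intro continuous_intros)
  have php2: "path hp2" using hp(1) unfolding hp2_def path_def by (intro continuous_intros)
  have ihq2: "path_image hq2 \<subseteq> D"
    using hq(2) D_add Deck_D[OF lam] unfolding hq2_def path_image_def lm_def by blast
  have ihp2: "path_image hp2 \<subseteq> D"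
    using hp(2) D_add Deck_D[OF mu] unfolding hp2_def path_image_def mm_def by blast
  define A where "A = hp +++ hq2"
  define B where "B = hq +++ hp2"
  have j1: "pathfinish hp = pathstart hq2"
    using hq(3) unfolding hq2_def lm_def pathstart_def pathfinish_def by simp
  have j2: "pathfinish hq = pathstart hp2"
    using hp(3) unfolding hp2_def mm_def pathstart_def pathfinish_def by simp
  have pA: "path A" unfolding A_def using hp(1) phq2 j1 by simp
  have pB: "path B" unfolding B_def using hq(1) php2 j2 by simp
  have iA: "path_image A \<subseteq> D" unfolding A_def using path_image_join_subset hp(2) ihq2 by blast
  have iB: "path_image B \<subseteq> D" unfolding B_def using path_image_join_subset hq(2) ihp2 by blast
  have sAB: "pathstart B = pathstart A" unfolding A_def B_def using hp(3) hq(3) by simp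
  have fAB: "pathfinish B = pathfinish A"
  proof -
    have hB: "pathfinish B = hp 1 + (hq 1 - y0)" unfolding B_def pathfinish_join unfolding hp2_def mm_def pathfinish_def by simp
    have hA: "pathfinish A = hq 1 + (hp 1 - y0)" unfolding A_def pathfinish_join unfolding hq2_def lm_def pathfinish_def by simp
    have e: "hp 1 + (hq 1 - y0) = hq 1 + (hp 1 - y0)" by (simp add: algebra_simps)
    show ?thesis by (simp only: hA hB e)
  qed
  have hAB: "homotopic_paths D A B"
  proof (rule homotopic_paths_linear[OF pA pB sAB fAB])
    fix t :: real assume "t \<in> {0..1}"
    then have "A t \<in> D" "B t \<in> D" using iA iB unfolding path_image_def by auto
    then show "closed_segment (A t) (B t) \<subseteq> D" using D_convex by (rule closed_segment_subset)
  qed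
  have FVfun: "FV \<in> D \<rightarrow> XV" using FV_in by blast
  have h1: "homotopic_paths XV (FV \<circ> A) (FV \<circ> B)"
    by (rule homotopic_paths_continuous_image[OF hAB FV_cont FVfun])
  have pq'p: "path (p' +++ q')" using pp qp p(4) q(3) by (simp add: p'_def q'_def pathstart_compose pathfinish_compose)
  have qp'p: "path (q' +++ p')" using pp qp p(3) q(4) by (simp add: p'_def q'_def pathstart_compose pathfinish_compose)
  have pq'i: "path_image (p' +++ q') \<subseteq> XV" using path_image_join_subset pim qim by blast
  have qp'i: "path_image (q' +++ p') \<subseteq> XV" using path_image_join_subset pim qim by blast
  have h2: "homotopic_paths XV (p' +++ q') (FV \<circ> A)"
  proof (rule homotopic_paths_eq[OF pq'p pq'i])
    fix t :: real assume t: "t \<in> {0..1}"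
    show "(p' +++ q') t = (FV \<circ> A) t"
    proof (cases "t \<le> 1/2")
      case True then show ?thesis unfolding A_def joinpaths_def using t hp(4)[of "2 * t"] by simp
    next
      case False
      then have "FV (hq2 (2 * t - 1)) = q' (2 * t - 1)"
        unfolding hq2_def using t hq(4)[of "2 * t - 1"] FV_deck[OF lam, of "hq (2 * t - 1)"] lm_def by simp
      then show ?thesis unfolding A_def joinpaths_def using False by simp
    qed
  qed
  have h3: "homotopic_paths XV (q' +++ p') (FV \<circ> B)"
  proof (rule homotopic_paths_eq[OF qp'p qp'i])
    fix t :: real assume t: "t \<in> {0..1}"
    show "(q' +++ p') t = (FV \<circ> B) t"
    proof (cases "t \<le> 1/2")
      case True then show ?thesis unfolding B_def joinpaths_def using t hq(4)[of "2 * t"] by simp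
    next
      case False
      then have "FV (hp2 (2 * t - 1)) = p' (2 * t - 1)"
        unfolding hp2_def using t hp(4)[of "2 * t - 1"] FV_deck[OF mu, of "hp (2 * t - 1)"] mm_def by simp
      then show ?thesis unfolding B_def joinpaths_def using False by simp
    qed
  qed
  have hV: "homotopic_paths XV (p' +++ q') (q' +++ p')"
    using homotopic_paths_trans[OF homotopic_paths_trans[OF h2 h1] homotopic_paths_sym[OF h3]] .
  define R where "R = (apply_bcontfun :: V \<Rightarrow> nat \<Rightarrow> real)"
  have Rc: "continuous_on XV R" unfolding R_def by (rule continuous_on_subset[OF continuous_R]) simp
  have Rfun: "R \<in> XV \<rightarrow> XX" unfolding R_def XV_def using R_E by auto
  have hX: "homotopic_paths XX (R \<circ> (p' +++ q')) (R \<circ> (q' +++ p'))"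
    by (rule homotopic_paths_continuous_image[OF hV Rc Rfun])
  have pqp: "path (p +++ q)" using p(1) q(1) p(4) q(3) by simp
  have qpp: "path (q +++ p)" using p(1) q(1) p(3) q(4) by simp
  have pqi: "path_image (p +++ q) \<subseteq> XX" using path_image_join_subset p(2) q(2) by blast
  have qpi: "path_image (q +++ p) \<subseteq> XX" using path_image_join_subset p(2) q(2) by blast
  have RE: "R (E z) = z" if "z \<in> XX" for z unfolding R_def E_def using R_E[OF that] .
  have e1: "homotopic_paths XX (p +++ q) (R \<circ> (p' +++ q'))"
  proof (rule homotopic_paths_eq[OF pqp pqi])
    fix t :: real assume t: "t \<in> {0..1}"
    have "(p +++ q) t \<in> XX" using pqi t unfolding path_image_def by blast
    moreover have "(p' +++ q') t = E ((p +++ q) t)" unfolding p'_def q'_def joinpaths_def by simp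
    ultimately show "(p +++ q) t = (R \<circ> (p' +++ q')) t" using RE by simp
  qed
  have e2: "homotopic_paths XX (q +++ p) (R \<circ> (q' +++ p'))"
  proof (rule homotopic_paths_eq[OF qpp qpi])
    fix t :: real assume t: "t \<in> {0..1}"
    have "(q +++ p) t \<in> XX" using qpi t unfolding path_image_def by blast
    moreover have "(q' +++ p') t = E ((q +++ p) t)" unfolding p'_def q'_def joinpaths_def by simp
    ultimately show "(q +++ p) t = (R \<circ> (q' +++ p')) t" using RE by simp
  qed
  show "homotopic_paths XX (p +++ q) (q +++ p)"
    using homotopic_paths_trans[OF homotopic_paths_trans[OF e1 hX] homotopic_paths_sym[OF e2]] .
qed

end

theorem proposition2p9:
  fixes L :: "nat list" and k n :: nat
  assumes "k \<ge> 2" and "length L = k" and "\<forall>l\<in>set L. l > 0" and "sum_list L = n"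
    and "generic L" and "reduced L"
  shows "\<forall>a\<in>geom_realization (tonnetz L). pi1_abelian (geom_realization (tonnetz L)) a"
proof -
  interpret tonn_gr L
    by unfold_locales (use assms in auto)
  show ?thesis using main_abelian by blast
qed


end
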